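(* Let $c>1$ and let $m\ge cn$. Then there exists a constant $d>0$ such that, for all sufficiently large $n$ and every fixed matrix $\mathbf B\in\mathbb{Z}_2^{m\times 2n}$, $H(\mathbf B\mathbf A)\le(1-d)mn$, where $\mathbf A\in\mathbb{Z}_2^{2n\times n}$ is a uniformly random full-rank isotropic matrix and $H$ denotes Shannon entropy (in bits).
   Context: Symplectic inner product on $\mathbb{Z}_2^{2n}$: $(\mathbf a,\mathbf b)\odot(\mathbf a',\mathbf b')=\mathbf a\cdot\mathbf b'+\mathbf a'\cdot\mathbf b\pmod2$. A uniformly random full-rank isotropic matrix in $\mathbb{Z}_2^{2n\times n}$ is uniform among matrices of column rank $n$ whose columns are pairwise symplectically orthogonal. *)

theory Defs
  imports Complex_Main "HOL-Library.Z2"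
begin

text \<open>Matrices over Z_2 of size r x c are represented as functions nat => nat => bit
  that vanish outside the index range {0..<r} x {0..<c}.\<close>

definition mats :: "nat \<Rightarrow> nat \<Rightarrow> (nat \<Rightarrow> nat \<Rightarrow> bit) set" where
  "mats r c = {M. \<forall>i j. (i \<ge> r \<or> j \<ge> c) \<longrightarrow> M i j = 0}"

definition matmul :: "nat \<Rightarrow> nat \<Rightarrow> nat \<Rightarrow> (nat \<Rightarrow> nat \<Rightarrow> bit) \<Rightarrow> (nat \<Rightarrow> nat \<Rightarrow> bit) \<Rightarrow> (nat \<Rightarrow> nat \<Rightarrow> bit)" where
  "matmul r k c B A = (\<lambda>i j. if i < r \<and> j < c then (\<Sum>l<k. B i l * A l j) else 0)"

definition symp_col :: "nat \<Rightarrow> (nat \<Rightarrow> nat \<Rightarrow> bit) \<Rightarrow> nat \<Rightarrow> nat \<Rightarrow> bit" where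
  "symp_col n A j j' = (\<Sum>i<n. A i j * A (n + i) j' + A i j' * A (n + i) j)"

definition full_col_rank :: "nat \<Rightarrow> nat \<Rightarrow> (nat \<Rightarrow> nat \<Rightarrow> bit) \<Rightarrow> bool" where
  "full_col_rank r c A = (\<forall>x :: nat \<Rightarrow> bit.
      (\<forall>i<r. (\<Sum>j<c. A i j * x j) = 0) \<longrightarrow> (\<forall>j<c. x j = 0))"

definition iso_mats :: "nat \<Rightarrow> (nat \<Rightarrow> nat \<Rightarrow> bit) set" where
  "iso_mats n = {A \<in> mats (2*n) n. full_col_rank (2*n) n A \<and>
                   (\<forall>j<n. \<forall>j'<n. symp_col n A j j' = 0)}"

definition entropy_uniform_image :: "'a set \<Rightarrow> ('a \<Rightarrow> 'b) \<Rightarrow> real" where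
  "entropy_uniform_image S f =
     - (\<Sum>y\<in>f ` S. let p = real (card {x\<in>S. f x = y}) / real (card S) in p * log 2 p)"

end

theory Submission
  imports Defs "HOL-Library.Function_Algebras"
begin


declare add_bit_eq_xor[simp del] mult_bit_eq_and[simp del]

lemma bit_add_self[simp]: "(x::bit) + x = 0"
  by (metis ab_group_add_class.ab_left_minus id_apply uminus_bit_def)

lemma vec_add_self[simp]: "(x::nat\<Rightarrow>bit) + x = 0"
  by (rule ext) simp

lemma vec_add_cancel: "(x::nat\<Rightarrow>bit) + (x + y) = y"
  by (simp add: add.assoc[symmetric])

lemma vec_eq_add_iff: "((x::nat\<Rightarrow>bit) + y = z) \<longleftrightarrow> (y = x + z)"
  by (metis vec_add_cancel)

definition vecs :: "nat \<Rightarrow> (nat \<Rightarrow> bit) set" where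
  "vecs m = {x. \<forall>i\<ge>m. x i = 0}"

definition dotv :: "nat \<Rightarrow> (nat\<Rightarrow>bit) \<Rightarrow> (nat\<Rightarrow>bit) \<Rightarrow> bit" where
  "dotv m x y = (\<Sum>i<m. x i * y i)"

definition subgrp :: "(nat \<Rightarrow> bit) set \<Rightarrow> bool" where
  "subgrp S \<longleftrightarrow> 0 \<in> S \<and> (\<forall>x\<in>S. \<forall>y\<in>S. x + y \<in> S)"

definition perp :: "nat \<Rightarrow> (nat \<Rightarrow> bit) set \<Rightarrow> (nat \<Rightarrow> bit) set" where
  "perp m S = {x \<in> vecs m. \<forall>s\<in>S. dotv m x s = 0}"

lemma vecs_zero[simp]: "0 \<in> vecs m" by (simp add: vecs_def)
lemma vecs_add[simp]: "x \<in> vecs m \<Longrightarrow> y \<in> vecs m \<Longrightarrow> x + y \<in> vecs m" by (simp add: vecs_def)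
lemma subgrp_vecs[simp]: "subgrp (vecs m)" by (simp add: subgrp_def)

lemma vecs_lists: "vecs m = (\<lambda>xs i. if i < m then xs ! i else 0) ` {xs. set xs \<subseteq> (UNIV::bit set) \<and> length xs = m}"
proof safe
  fix x assume "x \<in> vecs m"
  then show "x \<in> (\<lambda>xs i. if i < m then xs ! i else 0) ` {xs. set xs \<subseteq> UNIV \<and> length xs = m}"
    by (intro image_eqI[where x="map x [0..<m]"]) (auto simp: vecs_def fun_eq_iff)
qed (auto simp: vecs_def)

lemma card_UNIV_bit: "card (UNIV::bit set) = 2"
proof -
  have u: "(UNIV::bit set) = {0,1}" by (auto intro: bit.exhaust)
  have "card {0::bit, 1} = 2" by simp
  then show ?thesis by (simp only: u)
qed

lemma finite_UNIV_bit[simp]: "finite (UNIV::bit set)"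
proof -
  have u: "(UNIV::bit set) = {0,1}" by (auto intro: bit.exhaust)
  show ?thesis by (simp only: u) simp
qed

lemma finite_vecs[simp]: "finite (vecs m)"
  unfolding vecs_lists by (rule finite_imageI) (rule finite_lists_length_eq, rule finite_UNIV_bit)

lemma card_vecs: "card (vecs m) = 2 ^ m"
proof -
  have "inj_on (\<lambda>xs i. if i < m then xs ! i else 0) {xs. set xs \<subseteq> (UNIV::bit set) \<and> length xs = m}"
  proof (rule inj_onI)
    fix xs ys assume a: "xs \<in> {xs. set xs \<subseteq> (UNIV::bit set) \<and> length xs = m}" "ys \<in> {xs. set xs \<subseteq> (UNIV::bit set) \<and> length xs = m}"
      and e: "(\<lambda>i. if i < m then xs ! i else 0) = (\<lambda>i. if i < m then ys ! i else 0)"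
    show "xs = ys"
    proof (rule nth_equalityI)
      show "length xs = length ys" using a by simp
      fix i assume "i < length xs"
      then show "xs ! i = ys ! i" using a fun_cong[OF e, of i] by simp
    qed
  qed
  then show ?thesis unfolding vecs_lists
    using card_lists_length_eq[of "UNIV::bit set" m] finite_UNIV_bit by (simp only: card_image card_UNIV_bit)
qed

lemma dotv_comm: "dotv m x y = dotv m y x"
  by (simp add: dotv_def mult.commute)

lemma dotv_add_left: "dotv m (x + y) z = dotv m x z + dotv m y z"
  by (simp add: dotv_def distrib_right sum.distrib)

lemma dotv_add_right: "dotv m z (x + y) = dotv m z x + dotv m z y"
  by (simp add: dotv_def distrib_left sum.distrib)

lemma dotv_zero_left[simp]: "dotv m 0 y = 0" by (simp add: dotv_def)
lemma dotv_zero_right[simp]: "dotv m y 0 = 0" by (simp add: dotv_def)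

definition unitv :: "nat \<Rightarrow> nat \<Rightarrow> bit" where "unitv i = (\<lambda>j. if j = i then 1 else 0)"

lemma dotv_unitv: "i < m \<Longrightarrow> dotv m (unitv i) y = y i"
proof -
  assume "i < m"
  have "dotv m (unitv i) y = (\<Sum>j<m. if j = i then y j else 0)"
    unfolding dotv_def unitv_def by (rule sum.cong) auto
  also have "\<dots> = y i" using \<open>i < m\<close> by (simp add: sum.delta)
  finally show ?thesis .
qed

lemma unitv_vecs: "i < m \<Longrightarrow> unitv i \<in> vecs m" by (simp add: unitv_def vecs_def)

lemma vecs_eq_zero: "y \<in> vecs m \<Longrightarrow> (\<forall>z\<in>vecs m. dotv m z y = 0) \<Longrightarrow> y = 0"
proof (rule ext)
  fix i assume y: "y \<in> vecs m" and h: "\<forall>z\<in>vecs m. dotv m z y = 0"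
  show "y i = 0 i"
  proof (cases "i < m")
    case True then show ?thesis using h unitv_vecs[OF True] dotv_unitv[OF True] by force
  next
    case False then show ?thesis using y by (simp add: vecs_def)
  qed
qed

lemma subgrp_finite: "subgrp S \<Longrightarrow> S \<subseteq> vecs m \<Longrightarrow> finite S"
  using finite_subset finite_vecs by blast

lemma subgrp_Int: "subgrp S \<Longrightarrow> subgrp T \<Longrightarrow> subgrp (S \<inter> T)"
  by (simp add: subgrp_def)

lemma subgrp_perp: "subgrp (perp m S)"
  by (auto simp: subgrp_def perp_def dotv_add_left)

lemma perp_vecs: "perp m S \<subseteq> vecs m" by (auto simp: perp_def)

lemma half_card:
  fixes h :: "(nat \<Rightarrow> bit) \<Rightarrow> bit"
  assumes T: "subgrp T" "finite T" and hadd: "\<And>x y. x\<in>T \<Longrightarrow> y \<in> T \<Longrightarrow> h (x + y) = h x + h y"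
    and t0: "t0 \<in> T" "h t0 = 1"
  shows "2 * card {t\<in>T. h t = 0} = card T"
proof -
  let ?Z = "{t\<in>T. h t = 0}" and ?O = "{t\<in>T. h t = 1}"
  have "T = ?Z \<union> ?O" by (auto intro: bit.exhaust)
  moreover have "?Z \<inter> ?O = {}" by auto
  ultimately have c: "card T = card ?Z + card ?O" using T(2)
    by (metis (no_types, lifting) card_Un_disjoint finite_Un)
  have "?O = (\<lambda>t. t0 + t) ` ?Z"
  proof safe
    fix t assume "t \<in> T" "h t = 1"
    then show "t \<in> (+) t0 ` ?Z"
      using T t0 hadd[of t0 t]
      by (intro image_eqI[where x="t0 + t"]) (auto simp: vec_add_cancel subgrp_def)
  next
    fix t assume "t \<in> T" "h t = 0" then show "t0 + t \<in> T" using T t0 by (simp add: subgrp_def)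
  next
    fix t assume "t \<in> T" "h t = 0" then show "h (t0 + t) = 1" using hadd[of t0 t] t0 by simp
  qed
  moreover have "inj_on (\<lambda>t. t0 + t) ?Z" by (rule inj_onI) simp
  ultimately have "card ?O = card ?Z" by (simp add: card_image)
  with c show ?thesis by simp
qed



lemma vec_two[simp]: "2 * (y::nat\<Rightarrow>bit) = 0"
  by (rule ext) simp

lemma vec_swap_cancel: "(x::nat\<Rightarrow>bit) + a + (x + b) = a + b"
proof (rule ext)
  fix i show "(x + a + (x + b)) i = (a + b) i"
    by (cases "x i"; cases "a i"; cases "b i") simp_all
qed

lemma card_hom:
  fixes f :: "(nat\<Rightarrow>bit) \<Rightarrow> (nat\<Rightarrow>bit)"
  assumes S: "subgrp S" "finite S" and f: "\<And>x y. x\<in>S \<Longrightarrow> y\<in>S \<Longrightarrow> f (x+y) = f x + f y"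
  shows "card S = card {x\<in>S. f x = 0} * card (f ` S)"
proof -
  let ?K = "{x\<in>S. f x = 0}"
  have U: "S = (\<Union>y\<in>f ` S. {x\<in>S. f x = y})" by auto
  have fib: "card {x\<in>S. f x = y} = card ?K" if y: "y \<in> f ` S" for y
  proof -
    from y obtain x0 where x0: "x0 \<in> S" "y = f x0" by auto
    have "{x\<in>S. f x = y} = (\<lambda>z. x0 + z) ` ?K"
    proof (rule set_eqI, rule iffI)
      fix w assume "w \<in> {x\<in>S. f x = y}"
      then have w: "w \<in> S" "f w = y" by auto
      have "x0 + w \<in> S" using S x0 w by (simp add: subgrp_def)
      moreover have "f (x0 + w) = 0" using f[OF x0(1) w(1)] x0 w by simp
      moreover have "w = x0 + (x0 + w)" by (simp only: vec_add_cancel)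
      ultimately show "w \<in> (\<lambda>z. x0 + z) ` ?K" by blast
    next
      fix w assume "w \<in> (\<lambda>z. x0 + z) ` ?K"
      then obtain z where z: "z \<in> S" "f z = 0" "w = x0 + z" by auto
      have "x0 + z \<in> S" using S x0 z by (simp add: subgrp_def)
      moreover have "f (x0 + z) = y" using f[OF x0(1) z(1)] x0 z by simp
      ultimately show "w \<in> {x\<in>S. f x = y}" using z by simp
    qed
    moreover have "inj_on (\<lambda>z. x0 + z) ?K" by (rule inj_onI) simp
    ultimately show ?thesis by (simp add: card_image)
  qed
  have "card S = (\<Sum>y\<in>f ` S. card {x\<in>S. f x = y})"
    by (subst U, rule card_UN_disjoint) (use S in auto)
  also have "\<dots> = (\<Sum>y\<in>f ` S. card ?K)" by (rule sum.cong) (auto simp: fib)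
  finally show ?thesis by simp
qed

lemma card_perp:
  assumes S: "subgrp S" "S \<subseteq> vecs m"
  shows "card (perp m S) * card S = 2 ^ m"
proof -
  have finS: "finite S" using subgrp_finite[OF S] .
  define Z where "Z = Sigma (vecs m) (\<lambda>x. {s\<in>S. dotv m x s = 0})"
  define Z' where "Z' = Sigma S (\<lambda>s. {x\<in>vecs m. dotv m x s = 0})"
  have cZ: "card Z = (\<Sum>x\<in>vecs m. card {s\<in>S. dotv m x s = 0})"
    unfolding Z_def by (rule card_SigmaI) (use finS in auto)
  have cZ': "card Z' = (\<Sum>s\<in>S. card {x\<in>vecs m. dotv m x s = 0})"
    unfolding Z'_def by (rule card_SigmaI) (use finS in auto)
  have "Z' = (\<lambda>(x,s). (s,x)) ` Z" unfolding Z_def Z'_def by auto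
  moreover have "inj_on (\<lambda>(x,s). (s,x)) Z" by (rule inj_onI) auto
  ultimately have ZZ: "card Z = card Z'" by (simp add: card_image)
  let ?p = "card (perp m S)" and ?s = "card S" and ?M = "(2::nat)^m"
  have pM: "?p \<le> ?M" using card_mono[OF finite_vecs perp_vecs] card_vecs by metis
  have A: "2 * card {s\<in>S. dotv m x s = 0} = (if x \<in> perp m S then 2 * ?s else ?s)" if x: "x \<in> vecs m" for x
  proof (cases "x \<in> perp m S")
    case True
    then have "{s\<in>S. dotv m x s = 0} = S" by (auto simp: perp_def)
    then show ?thesis using True by simp
  next
    case False
    then obtain t0 where t0: "t0 \<in> S" "dotv m x t0 = 1" using x by (auto simp: perp_def)
    show ?thesis using False half_card[OF S(1) finS, where h="dotv m x", OF _ t0] by (simp add: dotv_add_right)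
  qed
  have B: "2 * card {x\<in>vecs m. dotv m x s = 0} = (if s = 0 then 2 * ?M else ?M)" if s: "s \<in> S" for s
  proof (cases "s = 0")
    case True then show ?thesis by (simp add: card_vecs)
  next
    case False
    then obtain i where i: "s i \<noteq> 0" by (metis ext zero_fun_apply)
    have im: "i < m"
    proof (rule ccontr)
      assume "\<not> i < m" then have "s i = 0" using s S(2) by (auto simp: vecs_def)
      then show False using i by simp
    qed
    have "dotv m (unitv i) s = 1" using dotv_unitv[OF im] i by simp
    then show ?thesis using False half_card[OF subgrp_vecs[of m] finite_vecs[of m], where h="\<lambda>x. dotv m x s", OF _ unitv_vecs[OF im]]
      by (simp add: dotv_add_left card_vecs)
  qed
  have "2 * card Z = (\<Sum>x\<in>vecs m. 2 * card {s\<in>S. dotv m x s = 0})" by (simp add: cZ sum_distrib_left)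
  also have "\<dots> = (\<Sum>x\<in>vecs m. (if x \<in> perp m S then 2 * ?s else ?s))" by (rule sum.cong) (auto simp: A)
  also have "\<dots> = (\<Sum>x\<in>perp m S. 2 * ?s) + (\<Sum>x\<in>vecs m - perp m S. ?s)"
    using sum.subset_diff[OF perp_vecs finite_vecs, of "\<lambda>x. (if x \<in> perp m S then 2 * ?s else ?s)"]
    by (simp add: sum.If_cases Int_absorb1[OF perp_vecs] Diff_eq)
  also have "\<dots> = 2 * ?p * ?s + (?M - ?p) * ?s"
    by (simp add: card_Diff_subset[OF finite_subset[OF perp_vecs finite_vecs] perp_vecs] card_vecs)
  finally have E1: "2 * card Z = 2 * ?p * ?s + (?M - ?p) * ?s" .
  have "2 * card Z' = (\<Sum>s\<in>S. 2 * card {x\<in>vecs m. dotv m x s = 0})" by (simp add: cZ' sum_distrib_left)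
  also have "\<dots> = (\<Sum>s\<in>S. (if s = 0 then 2 * ?M else ?M))" by (rule sum.cong) (auto simp: B)
  also have "\<dots> = 2 * ?M + (?s - 1) * ?M"
  proof -
    have z: "0 \<in> S" using S by (simp add: subgrp_def)
    have r: "(\<Sum>s\<in>S. (if s = 0 then 2 * ?M else ?M)) = (if (0::nat\<Rightarrow>bit) = 0 then 2 * ?M else ?M) + (\<Sum>s\<in>S - {0}. (if s = 0 then 2 * ?M else ?M))"
      using sum.remove[OF finS z] by blast
    have r2: "(\<Sum>s\<in>S - {0}. (if s = 0 then 2 * ?M else ?M)) = (\<Sum>s\<in>S - {0}. ?M)" by (rule sum.cong) auto
    show ?thesis unfolding r r2 using z finS by simp
  qed
  finally have E2: "2 * card Z' = 2 * ?M + (?s - 1) * ?M" .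
  have s1: "?s \<ge> 1" using S finS by (metis One_nat_def Suc_leI card_gt_0_iff empty_iff subgrp_def)
  from E1 E2 ZZ have "2 * ?p * ?s + (?M - ?p) * ?s = 2 * ?M + (?s - 1) * ?M" by simp
  then have "2 * ?p * ?s + ?M * ?s - ?p * ?s = ?M + ?s * ?M"
    using pM s1 by (simp add: diff_mult_distrib algebra_simps)
  moreover have "?p * ?s \<le> ?M * ?s" using pM by simp
  ultimately show ?thesis by (simp add: algebra_simps)
qed

fun spl :: "(nat\<Rightarrow>bit) set \<Rightarrow> (nat\<Rightarrow>bit) list \<Rightarrow> (nat\<Rightarrow>bit) set" where
  "spl W [] = W"
| "spl W (x # xs) = spl W xs \<union> (\<lambda>y. x + y) ` spl W xs"

fun indep :: "(nat\<Rightarrow>bit) set \<Rightarrow> (nat\<Rightarrow>bit) list \<Rightarrow> bool" where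
  "indep W [] = True"
| "indep W (x # xs) = (x \<notin> spl W xs \<and> indep W xs)"

lemma subgrp_step:
  assumes S: "subgrp S" shows "subgrp (S \<union> (\<lambda>y. x + y) ` S)"
  unfolding subgrp_def
proof (intro conjI ballI)
  show "0 \<in> S \<union> (+) x ` S" using S by (simp add: subgrp_def)
next
  fix a b assume a: "a \<in> S \<union> (+) x ` S" and b: "b \<in> S \<union> (+) x ` S"
  have cl: "\<And>u v. u \<in> S \<Longrightarrow> v \<in> S \<Longrightarrow> u + v \<in> S" using S by (simp add: subgrp_def)
  show "a + b \<in> S \<union> (+) x ` S"
  proof (cases "a \<in> S")
    case aS: True
    show ?thesis
    proof (cases "b \<in> S")
      case True then show ?thesis using aS cl by blast
    next
      case False
      then obtain b' where b': "b' \<in> S" "b = x + b'" using b by blast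
      have "a + b = x + (a + b')" using b' by (simp add: ac_simps)
      then show ?thesis using cl[OF aS b'(1)] by blast
    qed
  next
    case False
    then obtain a' where a': "a' \<in> S" "a = x + a'" using a by blast
    show ?thesis
    proof (cases "b \<in> S")
      case True
      have "a + b = x + (a' + b)" using a' by (simp add: ac_simps)
      then show ?thesis using cl[OF a'(1) True] by blast
    next
      case False
      then obtain b' where b': "b' \<in> S" "b = x + b'" using b by blast
      have "a + b = a' + b'" using a' b' by (simp only: vec_swap_cancel)
      then show ?thesis using cl[OF a'(1) b'(1)] by (metis UnI1)
    qed
  qed
qed

lemma subgrp_spl: "subgrp W \<Longrightarrow> subgrp (spl W xs)"
  by (induction xs) (auto intro: subgrp_step)

lemma spl_sup: "W \<subseteq> spl W xs"
  by (induction xs) auto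

lemma spl_mem: "0 \<in> W \<Longrightarrow> x \<in> set xs \<Longrightarrow> x \<in> spl W xs"
proof (induction xs)
  case (Cons a xs)
  then show ?case
  proof (cases "x = a")
    case True
    have "0 \<in> spl W xs" using Cons spl_sup by blast
    then have "a + 0 \<in> spl W (a # xs)" by simp
    then show ?thesis using True by simp
  qed auto
qed simp

lemma spl_least: "subgrp K \<Longrightarrow> W \<subseteq> K \<Longrightarrow> set xs \<subseteq> K \<Longrightarrow> spl W xs \<subseteq> K"
  by (induction xs) (auto simp: subgrp_def)

lemma spl_mono: "W \<subseteq> W' \<Longrightarrow> spl W xs \<subseteq> spl W' xs"
  by (induction xs) auto

lemma spl_append: "spl W (xs @ ys) = spl (spl W ys) xs"
  by (induction xs) auto

lemma finite_spl: "finite W \<Longrightarrow> finite (spl W xs)"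
  by (induction xs) auto

lemma card_spl_le: "finite W \<Longrightarrow> card (spl W xs) \<le> card W * 2 ^ length xs"
proof (induction xs)
  case (Cons x xs)
  have "card (spl W (x # xs)) \<le> card (spl W xs) + card ((\<lambda>y. x + y) ` spl W xs)"
    by (simp add: card_Un_le)
  also have "\<dots> \<le> 2 * card (spl W xs)" using card_image_le[OF finite_spl[OF Cons.prems]] by simp
  finally show ?case using Cons by simp
qed simp

lemma card_step:
  assumes "subgrp S" "finite S" "x \<notin> S"
  shows "card (S \<union> (\<lambda>y. x + y) ` S) = 2 * card S"
proof -
  have d: "S \<inter> (\<lambda>y. x + y) ` S = {}"
  proof safe
    fix y assume y: "y \<in> S" "x + y \<in> S"
    then have "(x + y) + y \<in> S" using assms(1) unfolding subgrp_def by blast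
    moreover have "(x + y) + y = x" by (simp only: add.assoc vec_add_self add_0_right)
    ultimately show "x + y \<in> {}" using assms(3) by simp
  qed
  have "inj_on (\<lambda>y. x + y) S" by (rule inj_onI) simp
  then show ?thesis using d assms(2) by (simp add: card_Un_disjoint card_image)
qed

lemma card_spl: "subgrp W \<Longrightarrow> finite W \<Longrightarrow> indep W xs \<Longrightarrow> card (spl W xs) = card W * 2 ^ length xs"
proof (induction xs)
  case (Cons x xs)
  then show ?case using card_step[OF subgrp_spl[OF Cons.prems(1)] finite_spl[OF Cons.prems(2)], of x xs] by simp
qed simp

lemma pow2_list: "\<exists>j. card (spl {0} xs) = 2 ^ j"
proof (induction xs)
  case Nil then show ?case by (metis card.empty card_insert_disjoint empty_iff finite.emptyI power_0 spl.simps(1) One_nat_def)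
next
  case (Cons x xs)
  then obtain j where j: "card (spl {0} xs) = 2 ^ j" by blast
  have sg: "subgrp (spl {0} xs)" by (rule subgrp_spl) (simp add: subgrp_def)
  show ?case
  proof (cases "x \<in> spl {0} xs")
    case True
    then have eq: "spl {0} (x # xs) = spl {0} xs" using sg by (auto simp: subgrp_def)
    show ?thesis using j eq by metis
  next
    case False
    then have "card (spl {0} (x # xs)) = 2 ^ Suc j" using card_step[OF sg finite_spl, of x] j by simp
    then show ?thesis by blast
  qed
qed

lemma subgrp_pow2: assumes "subgrp S" "finite S" shows "\<exists>j. card S = 2 ^ j"
proof -
  obtain xs where xs: "set xs = S" using finite_list[OF assms(2)] by blast
  have "spl {0} xs \<subseteq> S" by (rule spl_least) (use assms xs in \<open>auto simp: subgrp_def\<close>)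
  moreover have "S \<subseteq> spl {0} xs" using spl_mem[of "{0}"] xs by auto
  ultimately show ?thesis using pow2_list[of xs] by auto
qed

lemma spl_decomp: "subgrp W \<Longrightarrow> z \<in> spl W xs \<Longrightarrow> \<exists>w\<in>W. \<exists>s\<in>spl {0} xs. z = w + s"
proof (induction xs arbitrary: z)
  case Nil then show ?case by (metis add_0_right singletonI spl.simps(1))
next
  case (Cons x xs)
  show ?case
  proof (cases "z \<in> spl W xs")
    case True then show ?thesis using Cons by (metis UnI1 spl.simps(2))
  next
    case False
    then obtain z' where z': "z' \<in> spl W xs" "z = x + z'" using Cons.prems by auto
    then obtain w s where ws: "w \<in> W" "s \<in> spl {0} xs" "z' = w + s" using Cons by blast
    have "x + s \<in> spl {0} (x # xs)" using ws by simp
    moreover have "z = w + (x + s)" using z' ws by (simp add: ac_simps)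
    ultimately show ?thesis using ws by blast
  qed
qed

lemma spl_vecs: "W \<subseteq> vecs m \<Longrightarrow> set xs \<subseteq> vecs m \<Longrightarrow> spl W xs \<subseteq> vecs m"
  by (rule spl_least) auto

lemma spl_image:
  assumes f: "\<And>a b. f (a + b) = f a + f b"
  shows "f ` spl W xs = spl (f ` W) (map f xs)"
proof (induction xs)
  case (Cons x xs)
  have "f ` spl W (x # xs) = f ` spl W xs \<union> f ` ((\<lambda>y. x + y) ` spl W xs)" by (simp add: image_Un)
  also have "f ` ((\<lambda>y. x + y) ` spl W xs) = (\<lambda>y. f x + y) ` (f ` spl W xs)"
    by (simp add: image_image f)
  finally show ?case using Cons by simp
qed simp

lemma indep_mono: "W \<subseteq> W' \<Longrightarrow> indep W' xs \<Longrightarrow> indep W xs"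
  by (induction xs) (simp, metis indep.simps(2) spl_mono subsetD)

lemma indep_append: "indep W ys \<Longrightarrow> indep (spl W ys) xs \<Longrightarrow> indep W (xs @ ys)"
  by (induction xs) (auto simp: spl_append)



definition vm :: "nat \<Rightarrow> (nat\<Rightarrow>bit) \<Rightarrow> (nat\<Rightarrow>nat\<Rightarrow>bit) \<Rightarrow> (nat\<Rightarrow>bit)" where
  "vm m z M = (\<lambda>j. \<Sum>i<m. z i * M i j)"

definition mv :: "nat \<Rightarrow> (nat\<Rightarrow>nat\<Rightarrow>bit) \<Rightarrow> (nat\<Rightarrow>bit) \<Rightarrow> (nat\<Rightarrow>bit)" where
  "mv k M y = (\<lambda>i. \<Sum>l<k. M i l * y l)"

definition Jv :: "nat \<Rightarrow> (nat\<Rightarrow>bit) \<Rightarrow> (nat\<Rightarrow>bit)" where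
  "Jv n u = (\<lambda>i. if i < n then u (n+i) else if i < 2*n then u (i - n) else 0)"

definition colm :: "(nat\<Rightarrow>nat\<Rightarrow>bit) \<Rightarrow> nat \<Rightarrow> (nat\<Rightarrow>bit)" where
  "colm M j = (\<lambda>i. M i j)"

lemma dot_assoc: "dotv k (vm m z M) y = dotv m z (mv k M y)"
proof -
  have "dotv k (vm m z M) y = (\<Sum>l<k. \<Sum>i<m. z i * M i l * y l)"
    by (simp add: dotv_def vm_def sum_distrib_right)
  also have "\<dots> = (\<Sum>i<m. \<Sum>l<k. z i * M i l * y l)" by (rule sum.swap)
  also have "\<dots> = dotv m z (mv k M y)"
    by (simp add: dotv_def mv_def sum_distrib_left mult.assoc)
  finally show ?thesis .
qed

lemma vm_add: "vm m (z + z') M = vm m z M + vm m z' M"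
  by (rule ext) (simp add: vm_def distrib_right sum.distrib)

lemma mv_add: "mv k M (y + y') = mv k M y + mv k M y'"
  by (rule ext) (simp add: mv_def distrib_left sum.distrib)

lemma Jv_add: "Jv n (u + u') = Jv n u + Jv n u'"
  by (rule ext) (simp add: Jv_def)

lemma vm_zero[simp]: "vm m 0 M = 0" by (rule ext) (simp add: vm_def)
lemma mv_zero[simp]: "mv k M 0 = 0" by (rule ext) (simp add: mv_def)
lemma Jv_zero[simp]: "Jv n 0 = 0" by (rule ext) (simp add: Jv_def)

lemma vm_vecs: "M \<in> mats m c \<Longrightarrow> vm m z M \<in> vecs c"
  by (simp add: vm_def vecs_def mats_def)

lemma mv_vecs: "M \<in> mats r k \<Longrightarrow> mv k M y \<in> vecs r"
  by (simp add: mv_def vecs_def mats_def)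

lemma Jv_vecs: "Jv n u \<in> vecs (2*n)"
  by (simp add: Jv_def vecs_def)

lemma Jv_Jv: "u \<in> vecs (2*n) \<Longrightarrow> Jv n (Jv n u) = u"
  by (rule ext) (auto simp: Jv_def vecs_def)

lemma Jv_inj: "u \<in> vecs (2*n) \<Longrightarrow> v \<in> vecs (2*n) \<Longrightarrow> Jv n u = Jv n v \<Longrightarrow> u = v"
  by (metis Jv_Jv)

lemma sum_2n: "(\<Sum>i<2*(n::nat). g i) = (\<Sum>i<n. g i) + (\<Sum>i<n. (g (n+i)::'a::comm_monoid_add))"
proof -
  have e: "{..<2*n} = {..<n} \<union> {n..<n+n}" by auto
  have "(\<Sum>i<2*n. g i) = (\<Sum>i\<in>{..<n} \<union> {n..<n+n}. g i)" by (simp only: e)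
  also have "\<dots> = (\<Sum>i<n. g i) + (\<Sum>i\<in>{n..<n+n}. g i)" by (rule sum.union_disjoint) auto
  finally have "(\<Sum>i<2*n. g i) = (\<Sum>i<n. g i) + (\<Sum>i\<in>{n..<n+n}. g i)" .
  also have "(\<Sum>i\<in>{n..<n+n}. g i) = (\<Sum>i<n. g (n+i))"
    using sum.shift_bounds_nat_ivl[of g 0 n n] by (simp add: lessThan_atLeast0 add.commute)
  finally show ?thesis .
qed

lemma dot_J: "dotv (2*n) (Jv n u) v = (\<Sum>i<n. u (n+i) * v i + u i * v (n+i))"
proof -
  have "dotv (2*n) (Jv n u) v = (\<Sum>i<n. Jv n u i * v i) + (\<Sum>i<n. Jv n u (n+i) * v (n+i))"
    unfolding dotv_def by (rule sum_2n)
  also have "(\<Sum>i<n. Jv n u i * v i) = (\<Sum>i<n. u (n+i) * v i)" by (rule sum.cong) (auto simp: Jv_def)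
  also have "(\<Sum>i<n. Jv n u (n+i) * v (n+i)) = (\<Sum>i<n. u i * v (n+i))" by (rule sum.cong) (auto simp: Jv_def)
  finally show ?thesis by (simp add: sum.distrib)
qed

lemma iso_J:
  assumes A: "A \<in> iso_mats n"
  shows "dotv (2*n) (Jv n (mv n A x)) (mv n A y) = 0"
proof -
  have sc: "\<And>j j'. j < n \<Longrightarrow> j' < n \<Longrightarrow> symp_col n A j j' = 0" using A by (simp add: iso_mats_def)
  have "dotv (2*n) (Jv n (mv n A x)) (mv n A y) =
        (\<Sum>i<n. (\<Sum>j<n. A (n+i) j * x j) * (\<Sum>j'<n. A i j' * y j') + (\<Sum>j<n. A i j * x j) * (\<Sum>j'<n. A (n+i) j' * y j'))"
    by (simp add: dot_J mv_def)
  also have "\<dots> = (\<Sum>i<n. \<Sum>j<n. \<Sum>j'<n. x j * y j' * (A i j * A (n+i) j' + A i j' * A (n+i) j))"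
  proof (rule sum.cong[OF refl])
    fix i
    have t1: "(\<Sum>j<n. A (n+i) j * x j) * (\<Sum>j'<n. A i j' * y j') = (\<Sum>j<n. \<Sum>j'<n. x j * y j' * (A i j' * A (n+i) j))"
      unfolding sum_product by (rule sum.cong[OF refl], rule sum.cong[OF refl]) (simp add: mult_ac)
    have t2: "(\<Sum>j<n. A i j * x j) * (\<Sum>j'<n. A (n+i) j' * y j') = (\<Sum>j<n. \<Sum>j'<n. x j * y j' * (A i j * A (n+i) j'))"
      unfolding sum_product by (rule sum.cong[OF refl], rule sum.cong[OF refl]) (simp add: mult_ac)
    show "(\<Sum>j<n. A (n+i) j * x j) * (\<Sum>j'<n. A i j' * y j') + (\<Sum>j<n. A i j * x j) * (\<Sum>j'<n. A (n+i) j' * y j') =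
      (\<Sum>j<n. \<Sum>j'<n. x j * y j' * (A i j * A (n+i) j' + A i j' * A (n+i) j))"
      unfolding t1 t2 by (simp add: sum.distrib[symmetric] distrib_left add.commute)
  qed
  also have "\<dots> = (\<Sum>j<n. \<Sum>i<n. \<Sum>j'<n. x j * y j' * (A i j * A (n+i) j' + A i j' * A (n+i) j))"
    by (rule sum.swap)
  also have "\<dots> = (\<Sum>j<n. \<Sum>j'<n. \<Sum>i<n. x j * y j' * (A i j * A (n+i) j' + A i j' * A (n+i) j))"
    by (rule sum.cong[OF refl], rule sum.swap)
  also have "\<dots> = (\<Sum>j<n. \<Sum>j'<n. x j * y j' * symp_col n A j j')"
    by (simp add: symp_col_def sum_distrib_left)
  also have "\<dots> = 0" by (simp add: sc)
  finally show ?thesis .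
qed

lemma mv_inj:
  assumes A: "A \<in> iso_mats n"
  shows "inj_on (mv n A) (vecs n)"
proof (rule inj_onI)
  fix x y assume x: "x \<in> vecs n" and y: "y \<in> vecs n" and e: "mv n A x = mv n A y"
  have h0: "mv n A (x + y) = 0" using e by (simp add: mv_add)
  have h: "(\<Sum>l<n. A i l * (x + y) l) = 0" for i
  proof -
    have "(\<lambda>i. \<Sum>l<n. A i l * (x + y) l) i = (0::nat\<Rightarrow>bit) i" using fun_cong[OF h0[unfolded mv_def], of i] .
    then show ?thesis by (simp only: zero_fun_apply)
  qed
  have fcr: "\<forall>x. (\<forall>i<2*n. (\<Sum>j<n. A i j * x j) = 0) \<longrightarrow> (\<forall>j<n. x j = 0)"
    using A unfolding iso_mats_def full_col_rank_def by blast
  have "\<forall>j<n. (x + y) j = 0" using fcr h by blast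
  then show "x = y"
  proof -
    assume h: "\<forall>j<n. (x + y) j = 0"
    show "x = y"
    proof (rule ext)
      fix j show "x j = y j"
      proof (cases "j < n")
        case True
        then have "x j + y j = 0" using h by simp
        then show ?thesis by (metis add_0_right bit_add_self add.assoc)
      next
        case False then show ?thesis using x y by (simp add: vecs_def)
      qed
    qed
  qed
qed

lemma iso_mats_mats: "A \<in> iso_mats n \<Longrightarrow> A \<in> mats (2*n) n" by (simp add: iso_mats_def)

lemma subgrp_image:
  assumes "subgrp S" "\<And>a b. f (a + b) = f a + f b"
  shows "subgrp (f ` S)"
proof -
  have "f 0 = 0" using assms(2)[of 0 0] by (metis add_0_right vec_add_self add.assoc)
  then show ?thesis using assms unfolding subgrp_def by (metis image_eqI imageE)
qed

lemma lagrangian: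
  assumes A: "A \<in> iso_mats n" and u: "u \<in> vecs (2*n)" and uA: "vm (2*n) u A = 0"
  shows "\<exists>x\<in>vecs n. Jv n u = mv n A x"
proof -
  let ?C = "mv n A ` vecs n"
  have Cv: "?C \<subseteq> vecs (2*n)" using mv_vecs[OF iso_mats_mats[OF A]] by auto
  have Csg: "subgrp ?C" by (rule subgrp_image) (simp_all add: mv_add)
  have cC: "card ?C = 2^n" using card_image[OF mv_inj[OF A]] card_vecs by simp
  have cP: "card (perp (2*n) ?C) * 2^n = 2^(2*n)" using card_perp[OF Csg Cv] cC by simp
  then have cP': "card (perp (2*n) ?C) = 2^n" by (simp add: power_mult_distrib mult_2 power_add)
  have sub: "Jv n ` ?C \<subseteq> perp (2*n) ?C"
    using iso_J[OF A] by (auto simp: perp_def Jv_vecs)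
  have "inj_on (Jv n) ?C" using Cv by (meson inj_onI Jv_inj subsetD)
  then have cJ: "card (Jv n ` ?C) = 2^n" using cC by (simp add: card_image)
  have eq: "Jv n ` ?C = perp (2*n) ?C"
    by (rule card_subset_eq) (use sub cJ cP' finite_subset[OF perp_vecs finite_vecs] in auto)
  have "u \<in> perp (2*n) ?C"
  proof -
    have "\<forall>s\<in>?C. dotv (2*n) u s = 0"
    proof
      fix s assume "s \<in> ?C"
      then obtain y where "s = mv n A y" by auto
      then show "dotv (2*n) u s = 0" using dot_assoc[of n "2*n" u A y] uA by simp
    qed
    then show ?thesis using u by (simp add: perp_def)
  qed
  then obtain x where x: "x \<in> vecs n" "u = Jv n (mv n A x)" using eq by (metis imageE)
  have "Jv n u = mv n A x" using x Jv_Jv[OF mv_vecs[OF iso_mats_mats[OF A]]] by simp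
  then show ?thesis using x by blast
qed

lemma iso_ker:
  assumes A: "A \<in> iso_mats n" and u: "u \<in> vecs (2*n)" "vm (2*n) u A = 0"
    and u': "u' \<in> vecs (2*n)" "vm (2*n) u' A = 0"
  shows "dotv (2*n) (Jv n u) u' = 0"
proof -
  obtain x where x: "Jv n u = mv n A x" using lagrangian[OF A u] by blast
  obtain x' where x': "Jv n u' = mv n A x'" using lagrangian[OF A u'] by blast
  have "u' = Jv n (mv n A x')" using x' Jv_Jv[OF u'(1)] by metis
  then have "dotv (2*n) (Jv n u) u' = dotv (2*n) (mv n A x) (Jv n (mv n A x'))" using x by simp
  also have "\<dots> = 0" using iso_J[OF A, of x' x] by (simp add: dotv_comm)
  finally show ?thesis .
qed

lemma vm_matmul:
  assumes B: "B \<in> mats m (2*n)" and A: "A \<in> mats (2*n) n"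
  shows "vm m z (matmul m (2*n) n B A) = vm (2*n) (vm m z B) A"
proof (rule ext)
  fix j show "vm m z (matmul m (2*n) n B A) j = vm (2*n) (vm m z B) A j"
  proof (cases "j < n")
    case True
    have "vm m z (matmul m (2*n) n B A) j = (\<Sum>i<m. \<Sum>l<2*n. z i * B i l * A l j)"
      using True by (simp add: vm_def matmul_def sum_distrib_left mult.assoc)
    also have "\<dots> = (\<Sum>l<2*n. \<Sum>i<m. z i * B i l * A l j)" by (rule sum.swap)
    also have "\<dots> = vm (2*n) (vm m z B) A j" by (simp add: vm_def sum_distrib_right)
    finally show ?thesis .
  next
    case False
    then show ?thesis using A by (simp add: vm_def matmul_def mats_def)
  qed
qed

lemma colm_matmul:
  assumes B: "B \<in> mats m (2*n)" and j: "j < n"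
  shows "colm (matmul m (2*n) n B A) j = mv (2*n) B (colm A j)"
  using B j by (auto simp: colm_def matmul_def mv_def mats_def fun_eq_iff)

lemma colm_vecs: "M \<in> mats m n \<Longrightarrow> colm M j \<in> vecs m"
  by (simp add: colm_def mats_def vecs_def)

lemma vm_colm: "M \<in> mats m n \<Longrightarrow> vm m z M j = (if j < n then dotv m z (colm M j) else 0)"
  by (simp add: vm_def dotv_def colm_def mats_def)

lemma mats_cols_image:
  assumes W: "W \<subseteq> vecs m"
  shows "{M \<in> mats m n. \<forall>j<n. colm M j \<in> W} = (\<lambda>cs i j. if j < n then (cs ! j) i else 0) ` {cs. set cs \<subseteq> W \<and> length cs = n}"
proof (rule set_eqI, rule iffI)
  fix M assume M: "M \<in> {M \<in> mats m n. \<forall>j<n. colm M j \<in> W}"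
  show "M \<in> (\<lambda>cs i j. if j < n then (cs ! j) i else 0) ` {cs. set cs \<subseteq> W \<and> length cs = n}"
  proof (rule image_eqI[where x="map (colm M) [0..<n]"])
    show "M = (\<lambda>i j. if j < n then (map (colm M) [0..<n] ! j) i else 0)"
      using M by (auto simp: fun_eq_iff colm_def mats_def)
    show "map (colm M) [0..<n] \<in> {cs. set cs \<subseteq> W \<and> length cs = n}" using M by auto
  qed
next
  fix M assume "M \<in> (\<lambda>cs i j. if j < n then (cs ! j) i else 0) ` {cs. set cs \<subseteq> W \<and> length cs = n}"
  then obtain cs where cs: "set cs \<subseteq> W" "length cs = n" "M = (\<lambda>i j. if j < n then (cs ! j) i else 0)" by auto
  have "M \<in> mats m n" unfolding mats_def
  proof (safe)
    fix i j assume mi: "m \<le> i"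
    show "M i j = 0"
    proof (cases "j < n")
      case True
      then have "cs ! j \<in> W" using cs by (metis nth_mem subsetD)
      then have "cs ! j \<in> vecs m" using W by blast
      then show ?thesis using mi cs(3) True by (simp add: vecs_def)
    qed (use cs in simp)
  next
    fix i j assume "n \<le> j" then show "M i j = 0" using cs by simp
  qed
  moreover have "\<forall>j<n. colm M j \<in> W" using cs by (auto simp: colm_def)
  ultimately show "M \<in> {M \<in> mats m n. \<forall>j<n. colm M j \<in> W}" by simp
qed

lemma mats_cols_card:
  assumes W: "W \<subseteq> vecs m"
  shows "card {M \<in> mats m n. \<forall>j<n. colm M j \<in> W} = card W ^ n"
    and "finite {M \<in> mats m n. \<forall>j<n. colm M j \<in> W}"
proof -
  have fW: "finite W" using finite_subset[OF W finite_vecs] .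
  have inj: "inj_on (\<lambda>cs i j. if j < n then (cs ! j) i else 0) {cs. set cs \<subseteq> W \<and> length cs = n}"
  proof (rule inj_onI)
    fix xs ys assume a: "xs \<in> {cs. set cs \<subseteq> W \<and> length cs = n}" "ys \<in> {cs. set cs \<subseteq> W \<and> length cs = n}"
      and e: "(\<lambda>i j. if j < n then (xs ! j) i else 0) = (\<lambda>i j. if j < n then (ys ! j) i else 0)"
    show "xs = ys"
    proof (rule nth_equalityI)
      show "length xs = length ys" using a by simp
      fix j assume "j < length xs"
      then show "xs ! j = ys ! j" using a e by (auto simp: fun_eq_iff) (metis)
    qed
  qed
  show "card {M \<in> mats m n. \<forall>j<n. colm M j \<in> W} = card W ^ n"
    unfolding mats_cols_image[OF W] using card_image[OF inj] card_lists_length_eq[OF fW] by simp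
  show "finite {M \<in> mats m n. \<forall>j<n. colm M j \<in> W}"
    unfolding mats_cols_image[OF W] using finite_lists_length_eq[OF fW] by simp
qed

lemma mats_all_cols: "mats m n = {M \<in> mats m n. \<forall>j<n. colm M j \<in> vecs m}"
  using colm_vecs by blast

lemma finite_mats: "finite (mats m n)"
  by (subst mats_all_cols) (rule mats_cols_card(2), simp)



definition kerM :: "nat \<Rightarrow> (nat\<Rightarrow>nat\<Rightarrow>bit) \<Rightarrow> (nat\<Rightarrow>bit) set" where
  "kerM m M = {z \<in> vecs m. vm m z M = 0}"

lemma subgrp_kerM: "subgrp (kerM m M)"
  by (auto simp: subgrp_def kerM_def vm_add)

lemma kerM_vecs: "kerM m M \<subseteq> vecs m" by (auto simp: kerM_def)

lemma card_kerM:
  assumes M: "M \<in> mats m n"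
  shows "2^m \<le> card (kerM m M) * 2^n"
proof -
  have "card (vecs m) = card {x\<in>vecs m. vm m x M = 0} * card ((\<lambda>z. vm m z M) ` vecs m)"
    by (rule card_hom) (simp_all add: vm_add)
  moreover have "card ((\<lambda>z. vm m z M) ` vecs m) \<le> 2^n"
    using card_mono[OF finite_vecs, of "(\<lambda>z. vm m z M) ` vecs m" n] vm_vecs[OF M] card_vecs by auto
  ultimately show ?thesis by (metis card_vecs kerM_def mult_le_mono2)
qed

lemma count_ker_sup:
  assumes S: "S \<subseteq> vecs m"
  shows "{M \<in> mats m n. S \<subseteq> kerM m M} = {M \<in> mats m n. \<forall>j<n. colm M j \<in> perp m S}"
proof (rule set_eqI, rule iffI)
  fix M assume M: "M \<in> {M \<in> mats m n. S \<subseteq> kerM m M}"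
  have "colm M j \<in> perp m S" if j: "j < n" for j
  proof -
    have Mm: "M \<in> mats m n" and SK: "S \<subseteq> kerM m M" using M by blast+
    have "\<forall>s\<in>S. dotv m (colm M j) s = 0"
    proof
      fix s assume "s \<in> S"
      then have "vm m s M = 0" using SK unfolding kerM_def by blast
      then have "vm m s M j = 0" by simp
      then show "dotv m (colm M j) s = 0" using vm_colm[OF Mm, of s j] j by (simp add: dotv_comm)
    qed
    then show ?thesis using colm_vecs[OF Mm] unfolding perp_def by blast
  qed
  then have "\<forall>j<n. colm M j \<in> perp m S" by blast
  then show "M \<in> {M \<in> mats m n. \<forall>j<n. colm M j \<in> perp m S}" using M by simp
next
  fix M assume M: "M \<in> {M \<in> mats m n. \<forall>j<n. colm M j \<in> perp m S}"
  have "S \<subseteq> kerM m M"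
  proof
    fix z assume z: "z \<in> S"
    have "vm m z M = 0"
    proof (rule ext)
      fix j show "vm m z M j = 0 j"
        using M z vm_colm[of M m n z j] by (auto simp: perp_def dotv_comm)
    qed
    then show "z \<in> kerM m M" using z S by (auto simp: kerM_def)
  qed
  then show "M \<in> {M \<in> mats m n. S \<subseteq> kerM m M}" using M by simp
qed

lemma count_ker:
  assumes S: "subgrp S" "S \<subseteq> vecs m"
  shows "card {M \<in> mats m n. S \<subseteq> kerM m M} = card (perp m S) ^ n"
    and "finite {M \<in> mats m n. S \<subseteq> kerM m M}"
  using mats_cols_card[OF perp_vecs[of m S], where n=n] count_ker_sup[OF S(2), of n] by simp_all

locale bsetup =
  fixes m n :: nat and B :: "nat \<Rightarrow> nat \<Rightarrow> bit"
  assumes B: "B \<in> mats m (2*n)"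
begin

definition RB where "RB = (\<lambda>z. vm m z B) ` vecs m"
definition NB where "NB = {z \<in> vecs m. vm m z B = 0}"
definition Phi where "Phi t = mv (2*n) B (Jv n (vm m t B))"
definition PB where "PB = {z \<in> vecs m. Phi z = 0}"
definition Good where "Good = {M \<in> mats m n. NB \<subseteq> kerM m M \<and> (\<forall>z\<in>kerM m M. \<forall>z'\<in>kerM m M. dotv m z (Phi z') = 0)}"
definition Img where "Img = (matmul m (2*n) n B) ` iso_mats n"
definition colB where "colB = mv (2*n) B ` vecs (2*n)"

lemma Phi_add: "Phi (a + b) = Phi a + Phi b"
  by (simp add: Phi_def vm_add Jv_add mv_add)

lemma Phi_zero[simp]: "Phi 0 = 0" unfolding Phi_def by simp

lemma Phi_vecs: "Phi t \<in> vecs m" unfolding Phi_def by (rule mv_vecs[OF B])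

lemma dot_Phi: "dotv m z (Phi t) = dotv (2*n) (vm m z B) (Jv n (vm m t B))"
  by (simp add: Phi_def dot_assoc)

lemma subgrp_RB: "subgrp RB" unfolding RB_def by (rule subgrp_image) (simp_all add: vm_add)
lemma RB_vecs: "RB \<subseteq> vecs (2*n)" unfolding RB_def using vm_vecs[OF B] by auto
lemma subgrp_NB: "subgrp NB" by (auto simp: subgrp_def NB_def vm_add)
lemma NB_vecs: "NB \<subseteq> vecs m" by (auto simp: NB_def)
lemma subgrp_PB: "subgrp PB" by (auto simp: subgrp_def PB_def Phi_add)
lemma PB_vecs: "PB \<subseteq> vecs m" by (auto simp: PB_def)
lemma NB_PB: "NB \<subseteq> PB" by (auto simp: NB_def PB_def Phi_def)

lemma Img_Good: "Img \<subseteq> Good"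
proof
  fix M assume "M \<in> Img"
  then obtain A where A: "A \<in> iso_mats n" and M: "M = matmul m (2*n) n B A" by (auto simp: Img_def)
  have Am: "A \<in> mats (2*n) n" using A by (simp add: iso_mats_def)
  have vmM: "\<And>z. vm m z M = vm (2*n) (vm m z B) A" using vm_matmul[OF B Am] M by simp
  have "M \<in> mats m n" using M by (simp add: matmul_def mats_def)
  moreover have "NB \<subseteq> kerM m M" by (auto simp: NB_def kerM_def vmM)
  moreover have "\<forall>z\<in>kerM m M. \<forall>z'\<in>kerM m M. dotv m z (Phi z') = 0"
  proof (intro ballI)
    fix z z' assume z: "z \<in> kerM m M" and z': "z' \<in> kerM m M"
    have "dotv m z (Phi z') = dotv (2*n) (Jv n (vm m z' B)) (vm m z B)"
      by (simp add: dot_Phi dotv_comm)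
    also have "\<dots> = 0"
      by (rule iso_ker[OF A]) (use z z' vm_vecs[OF B] in \<open>auto simp: kerM_def vmM\<close>)
    finally show "dotv m z (Phi z') = 0" .
  qed
  ultimately show "M \<in> Good" by (simp add: Good_def)
qed

lemma card_RB_NB: "card NB * card RB = 2^m"
  using card_hom[OF subgrp_vecs[of m] finite_vecs[of m], where f="\<lambda>z. vm m z B"] card_vecs
  by (simp add: vm_add NB_def RB_def)

lemma perp_RB_ker: "perp (2*n) RB = {x \<in> vecs (2*n). mv (2*n) B x = 0}"
proof (rule set_eqI, rule iffI)
  fix x assume x: "x \<in> perp (2*n) RB"
  then have "\<forall>z\<in>vecs m. dotv m z (mv (2*n) B x) = 0"
    by (auto simp: perp_def RB_def dot_assoc[symmetric] dotv_comm)
  then have "mv (2*n) B x = 0" by (rule vecs_eq_zero[OF mv_vecs[OF B]])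
  then show "x \<in> {x \<in> vecs (2*n). mv (2*n) B x = 0}" using x by (simp add: perp_def)
next
  fix x assume x: "x \<in> {x \<in> vecs (2*n). mv (2*n) B x = 0}"
  then show "x \<in> perp (2*n) RB"
    by (auto simp: perp_def RB_def dotv_comm[of "2*n" x] dot_assoc)
qed

lemma card_colB: "card colB * card (perp (2*n) RB) = 2^(2*n)"
  using card_hom[OF subgrp_vecs[of "2*n"] finite_vecs[of "2*n"], where f="mv (2*n) B"] card_vecs perp_RB_ker
  by (simp add: mv_add colB_def mult.commute)

lemma card_PB: "card PB \<le> card NB * card (perp (2*n) RB)"
proof -
  let ?g = "\<lambda>z. Jv n (vm m z B)"
  have "card PB = card {x\<in>PB. ?g x = 0} * card (?g ` PB)"
    by (rule card_hom[OF subgrp_PB]) (simp_all add: finite_subset[OF PB_vecs] vm_add Jv_add)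
  moreover have "{x\<in>PB. ?g x = 0} = NB"
  proof -
    have "\<And>z. ?g z = 0 \<Longrightarrow> vm m z B = 0"
      using Jv_inj[OF vm_vecs[OF B] vecs_zero] by simp
    then show ?thesis using NB_PB by (auto simp: NB_def PB_def)
  qed
  moreover have "?g ` PB \<subseteq> perp (2*n) RB"
  proof
    fix u assume "u \<in> ?g ` PB"
    then obtain z where z: "z \<in> PB" "u = ?g z" by auto
    have "\<forall>s\<in>RB. dotv (2*n) u s = 0"
    proof
      fix s assume "s \<in> RB"
      then obtain z' where z': "z' \<in> vecs m" "s = vm m z' B" by (auto simp: RB_def)
      have "dotv (2*n) u s = dotv m z' (Phi z)" using z z' by (simp add: dot_Phi dotv_comm)
      then show "dotv (2*n) u s = 0" using z by (simp add: PB_def)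
    qed
    then show "u \<in> perp (2*n) RB" using z by (simp add: perp_def Jv_vecs)
  qed
  then have "card (?g ` PB) \<le> card (perp (2*n) RB)"
    by (rule card_mono[OF finite_subset[OF perp_vecs finite_vecs]])
  ultimately show ?thesis by simp
qed

lemma Img_cols: "Img \<subseteq> {M \<in> mats m n. \<forall>j<n. colm M j \<in> colB}"
proof
  fix M assume "M \<in> Img"
  then obtain A where A: "A \<in> iso_mats n" and M: "M = matmul m (2*n) n B A" by (auto simp: Img_def)
  have Am: "A \<in> mats (2*n) n" using A by (simp add: iso_mats_def)
  have "M \<in> mats m n" using M by (simp add: matmul_def mats_def)
  moreover have "\<forall>j<n. colm M j \<in> colB"
    using M colm_matmul[OF B] colm_vecs[OF Am] by (auto simp: colB_def)
  ultimately show "M \<in> {M \<in> mats m n. \<forall>j<n. colm M j \<in> colB}" by simp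
qed

lemma dims:
  obtains r where "card RB = 2^r" "r \<le> m" "r \<le> 2*n" "card NB = 2^(m-r)"
    "card (perp (2*n) RB) = 2^(2*n - r)" "card colB = 2^r"
proof -
  obtain r where r: "card RB = 2^r" using subgrp_pow2[OF subgrp_RB finite_subset[OF RB_vecs finite_vecs]] by blast
  have "card RB \<le> 2^(2*n)" using card_mono[OF finite_vecs RB_vecs] card_vecs by metis
  then have r2: "r \<le> 2*n" using r by simp
  have "card RB \<le> card (vecs m)" unfolding RB_def by (rule card_image_le[OF finite_vecs])
  then have rm: "r \<le> m" using r card_vecs by simp
  have "card NB * 2^r = 2^(m-r) * 2^r" using card_RB_NB r rm by (simp add: power_add[symmetric])
  then have n: "card NB = 2^(m-r)" by simp
  have p: "card (perp (2*n) RB) * 2^r = 2^(2*n-r) * 2^r"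
    using card_perp[OF subgrp_RB RB_vecs] r r2 by (simp add: power_add[symmetric])
  then have p': "card (perp (2*n) RB) = 2^(2*n - r)" by simp
  have "card colB * 2^(2*n-r) = 2^r * 2^(2*n-r)" using card_colB p' r2 by (simp add: power_add[symmetric])
  then have "card colB = 2^r" by simp
  then show ?thesis using that r rm r2 n p' by blast
qed

lemma finite_Good: "finite Good"
  by (rule finite_subset[OF _ finite_mats[of m n]]) (auto simp: Good_def)

lemma card_Img_triv: "card RB = 2^r \<Longrightarrow> card Img \<le> 2^(r*n)"
proof -
  assume r: "card RB = 2^r"
  obtain r' where r': "card RB = 2^r'" "card colB = 2^r'" by (rule dims) blast
  have "r' = r" using r r' by simp
  have cv: "colB \<subseteq> vecs m" using mv_vecs[OF B] by (auto simp: colB_def)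
  have "card Img \<le> card {M \<in> mats m n. \<forall>j<n. colm M j \<in> colB}"
    by (rule card_mono[OF mats_cols_card(2)[OF cv] Img_cols])
  also have "\<dots> = (2^r)^n" using mats_cols_card(1)[OF cv] r' \<open>r' = r\<close> by simp
  finally show ?thesis by (simp add: power_mult)
qed

end



lemma lists_suc:
  assumes step: "\<And>x ys. Q (x#ys) \<longleftrightarrow> x \<in> A ys \<and> Q ys"
  shows "{xs. length xs = Suc j \<and> Q xs} = (\<lambda>(ys,x). x # ys) ` Sigma {ys. length ys = j \<and> Q ys} A"
proof (rule set_eqI, rule iffI)
  fix xs assume "xs \<in> {xs. length xs = Suc j \<and> Q xs}"
  then obtain x ys where "xs = x # ys" "length ys = j" "Q (x#ys)" by (cases xs) auto
  then show "xs \<in> (\<lambda>(ys,x). x # ys) ` Sigma {ys. length ys = j \<and> Q ys} A"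
    using step by (intro image_eqI[where x="(ys,x)"]) auto
qed (use step in auto)

lemma lists_suc_card:
  assumes step: "\<And>x ys. Q (x#ys) \<longleftrightarrow> x \<in> A ys \<and> Q ys"
    and fin: "finite {ys. length ys = j \<and> Q ys}" "\<And>ys. Q ys \<Longrightarrow> finite (A ys)"
  shows "card {xs. length xs = Suc j \<and> Q xs} = (\<Sum>ys\<in>{ys. length ys = j \<and> Q ys}. card (A ys))"
    and "finite {xs. length xs = Suc j \<and> Q xs}"
proof -
  have inj: "inj_on (\<lambda>(ys,x). x # ys) (Sigma {ys. length ys = j \<and> Q ys} A)" by (rule inj_onI) auto
  show "card {xs. length xs = Suc j \<and> Q xs} = (\<Sum>ys\<in>{ys. length ys = j \<and> Q ys}. card (A ys))"
    unfolding lists_suc[OF step] card_image[OF inj] using fin by (subst card_SigmaI) auto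
  show "finite {xs. length xs = Suc j \<and> Q xs}"
    unfolding lists_suc[OF step] using fin by auto
qed

lemma lists_card_le:
  assumes step: "\<And>x ys. Q (x#ys) \<longleftrightarrow> x \<in> A ys \<and> Q ys"
    and fin: "\<And>ys. Q ys \<Longrightarrow> finite (A ys)"
    and bd: "\<And>ys. Q ys \<Longrightarrow> length ys < J \<Longrightarrow> card (A ys) \<le> b (length ys)"
  shows "j \<le> J \<Longrightarrow> card {xs. length xs = j \<and> Q xs} \<le> (\<Prod>i<j. b i) \<and> finite {xs. length xs = j \<and> Q xs}"
proof (induction j)
  case 0
  have sub: "{xs. length xs = 0 \<and> Q xs} \<subseteq> {[]}" by auto
  have "card {xs. length xs = 0 \<and> Q xs} \<le> card {[]::'a list}" by (rule card_mono[OF _ sub]) simp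
  moreover have "finite {xs. length xs = 0 \<and> Q xs}" by (rule finite_subset[OF sub]) simp
  ultimately show ?case by simp
next
  case (Suc j)
  then have IH: "card {xs. length xs = j \<and> Q xs} \<le> (\<Prod>i<j. b i)" "finite {xs. length xs = j \<and> Q xs}" by auto
  have "card {xs. length xs = Suc j \<and> Q xs} = (\<Sum>ys\<in>{ys. length ys = j \<and> Q ys}. card (A ys))"
    using lists_suc_card(1)[OF step IH(2) fin] by simp
  also have "\<dots> \<le> (\<Sum>ys\<in>{ys. length ys = j \<and> Q ys}. b j)"
    by (rule sum_mono) (use bd Suc.prems in auto)
  also have "\<dots> = card {xs. length xs = j \<and> Q xs} * b j" by simp
  also have "\<dots> \<le> (\<Prod>i<j. b i) * b j" using IH(1) by simp
  finally show ?case using lists_suc_card(2)[OF step IH(2) fin] by simp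
qed

lemma lists_card_ge:
  assumes step: "\<And>x ys. Q (x#ys) \<longleftrightarrow> x \<in> A ys \<and> Q ys" and Q0: "Q []"
    and fin: "\<And>ys. Q ys \<Longrightarrow> finite (A ys)"
    and bd: "\<And>ys. Q ys \<Longrightarrow> length ys < J \<Longrightarrow> card (A ys) \<ge> b"
  shows "j \<le> J \<Longrightarrow> card {xs. length xs = j \<and> Q xs} \<ge> b ^ j \<and> finite {xs. length xs = j \<and> Q xs}"
proof (induction j)
  case 0
  have "{xs. length xs = 0 \<and> Q xs} = {[]}" using Q0 by auto
  then show ?case by simp
next
  case (Suc j)
  then have IH: "card {xs. length xs = j \<and> Q xs} \<ge> b ^ j" "finite {xs. length xs = j \<and> Q xs}" by auto
  have "card {xs. length xs = j \<and> Q xs} * b = (\<Sum>ys\<in>{ys. length ys = j \<and> Q ys}. b)" by simp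
  also have "\<dots> \<le> (\<Sum>ys\<in>{ys. length ys = j \<and> Q ys}. card (A ys))"
    by (rule sum_mono) (use bd Suc.prems in auto)
  also have "\<dots> = card {xs. length xs = Suc j \<and> Q xs}"
    using lists_suc_card(1)[OF step IH(2) fin] by simp
  finally have "b ^ j * b \<le> card {xs. length xs = Suc j \<and> Q xs}"
    using IH(1) by (meson le_trans mult_le_mono1)
  then show ?case using lists_suc_card(2)[OF step IH(2) fin] by (simp add: mult.commute)
qed

lemma spl_sum: "w \<in> W \<Longrightarrow> s \<in> spl {0} ys \<Longrightarrow> w + s \<in> spl W ys"
proof (induction ys arbitrary: s)
  case Nil then show ?case by simp
next
  case (Cons y ys)
  show ?case
  proof (cases "s \<in> spl {0} ys")
    case True
    have "w + s \<in> spl W ys" by (rule Cons.IH[OF Cons.prems(1) True])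
    then show ?thesis by (simp only: spl.simps) blast
  next
    case False
    then obtain s' where s': "s' \<in> spl {0} ys" "s = y + s'" using Cons.prems(2) by (simp only: spl.simps) blast
    have e: "w + s = y + (w + s')" by (simp only: s'(2) add.left_commute)
    have "w + s' \<in> spl W ys" by (rule Cons.IH[OF Cons.prems(1) s'(1)])
    then show ?thesis unfolding e by (simp only: spl.simps) blast
  qed
qed

fun orth :: "((nat\<Rightarrow>bit) \<Rightarrow> (nat\<Rightarrow>bit)) \<Rightarrow> nat \<Rightarrow> (nat\<Rightarrow>bit) list \<Rightarrow> bool" where
  "orth F m [] = True"
| "orth F m (x # ys) = ((\<forall>y\<in>set ys. dotv m x (F y) = 0) \<and> orth F m ys)"



lemma orth_gen:
  assumes "set ys \<subseteq> K" "\<forall>z\<in>K. \<forall>z'\<in>K. dotv m z (F z') = 0"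
  shows "orth F m ys"
  using assms(1)
proof (induction ys)
  case Nil show ?case by (simp only: orth.simps)
next
  case (Cons x ys)
  have a: "x \<in> K" using Cons.prems by simp
  have b: "set ys \<subseteq> K" using Cons.prems by simp
  have c: "\<forall>y\<in>set ys. dotv m x (F y) = 0" using assms(2) a b by blast
  show ?case using Cons.IH[OF b] c by simp
qed

locale bsetup2 = bsetup +
  fixes r :: nat
  assumes rRB: "card RB = 2^r" and nr: "n \<le> r"
begin

lemma rdims: "r \<le> m" "r \<le> 2*n" "card NB = 2^(m-r)" "card (perp (2*n) RB) = 2^(2*n - r)"
proof -
  obtain r' where r': "card RB = 2^r'" "r' \<le> m" "r' \<le> 2*n" "card NB = 2^(m-r')"
    "card (perp (2*n) RB) = 2^(2*n - r')" by (rule dims) blast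
  have "r' = r" using r' rRB by simp
  then show "r \<le> m" "r \<le> 2*n" "card NB = 2^(m-r)" "card (perp (2*n) RB) = 2^(2*n - r)" using r' by auto
qed

definition "k = r - n"
definition "K1 M = kerM m M \<inter> PB"
definition "T1s M e = {xs. length xs = e \<and> (set xs \<subseteq> K1 M \<and> indep NB xs)}"
definition "emax M = Max {e. e \<le> k \<and> T1s M e \<noteq> {}}"
definition "T2s M f = {ys. length ys = f \<and> (set ys \<subseteq> kerM m M \<and> indep PB ys)}"
definition "TP e = {xs. length xs = e \<and> (set xs \<subseteq> PB \<and> indep NB xs)}"
definition "TS f = {ys. length ys = f \<and> (set ys \<subseteq> vecs m \<and> indep PB ys \<and> orth Phi m ys)}"
definition "MS T1 T2 = {M \<in> mats m n. spl NB (T2 @ T1) \<subseteq> kerM m M}"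
definition "Ge e = {M \<in> Good. emax M = e}"


lemma indep_Phi: "set ys \<subseteq> vecs m \<Longrightarrow> indep PB ys \<Longrightarrow> indep {0} (map Phi ys)"
proof (induction ys)
  case Nil then show ?case by simp
next
  case (Cons x ys)
  have p1: "set ys \<subseteq> vecs m" using Cons.prems(1) by simp
  have p2: "indep PB ys" using Cons.prems(2) by simp
  have IH: "indep {0} (map Phi ys)" by (rule Cons.IH[OF p1 p2])
  have im: "spl {0} (map Phi ys) = Phi ` spl {0} ys"
    using spl_image[of Phi "{0}" ys] Phi_add by simp
  have "Phi x \<notin> spl {0} (map Phi ys)"
  proof
    assume "Phi x \<in> spl {0} (map Phi ys)"
    then obtain s where s: "s \<in> spl {0} ys" "Phi x = Phi s" using im by auto
    have sv: "s \<in> vecs m" using spl_vecs[of "{0}" m ys] s Cons.prems by auto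
    have "Phi (x + s) = 0" using s Phi_add by simp
    then have "x + s \<in> PB" using sv Cons.prems by (simp add: PB_def)
    then have "(x + s) + s \<in> spl PB ys" by (rule spl_sum[OF _ s(1)])
    then have "x \<in> spl PB ys" by (simp add: add.assoc)
    then show False using Cons.prems by simp
  qed
  then show ?case using IH by (simp only: list.map indep.simps) blast
qed

lemma TS_card: "card (TS f) \<le> (\<Prod>j<f. 2^(m-j)) \<and> finite (TS f)"
proof -
  let ?A = "\<lambda>ys. {x\<in>vecs m. x \<notin> spl PB ys \<and> (\<forall>y\<in>set ys. dotv m x (Phi y) = 0)}"
  let ?Q = "\<lambda>ys. set ys \<subseteq> vecs m \<and> indep PB ys \<and> orth Phi m ys"
  have step: "\<And>x ys. ?Q (x#ys) \<longleftrightarrow> x \<in> ?A ys \<and> ?Q ys" by auto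
  have fin: "\<And>ys. finite (?A ys)" by (rule finite_subset[OF _ finite_vecs[of m]]) auto
  have bd: "card (?A ys) \<le> 2^(m - length ys)" if Q: "?Q ys" for ys
  proof -
    let ?S = "spl {0} (map Phi ys)"
    have sg: "subgrp ?S" by (rule subgrp_spl) (simp add: subgrp_def)
    have Sv: "?S \<subseteq> vecs m" by (rule spl_vecs) (use Phi_vecs in auto)
    have cS: "card ?S = 2^length ys" using card_spl[OF _ _ indep_Phi, of "ys"] Q by (simp add: subgrp_def)
    have "2^length ys \<le> (2::nat)^m" using card_mono[OF finite_vecs Sv] cS card_vecs by metis
    then have lm: "length ys \<le> m" by simp
    have cp: "card (perp m ?S) * 2^length ys = 2^m" using card_perp[OF sg Sv] cS by simp
    have cp': "card (perp m ?S) = 2^(m - length ys)"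
    proof -
      have "card (perp m ?S) * 2^length ys = 2^(m - length ys) * 2^length ys"
        using cp lm by (simp add: power_add[symmetric])
      then show ?thesis by simp
    qed
    have "?A ys \<subseteq> perp m ?S"
    proof
      fix x assume x: "x \<in> ?A ys"
      have "?S \<subseteq> {s. dotv m x s = 0}"
        by (rule spl_least) (use x in \<open>auto simp: subgrp_def dotv_add_right\<close>)
      then show "x \<in> perp m ?S" using x by (auto simp: perp_def)
    qed
    then have "card (?A ys) \<le> card (perp m ?S)" by (rule card_mono[OF finite_subset[OF perp_vecs finite_vecs]])
    then show ?thesis using cp' by simp
  qed
  have "card {xs. length xs = f \<and> ?Q xs} \<le> (\<Prod>j<f. 2^(m-j)) \<and> finite {xs. length xs = f \<and> ?Q xs}"
    by (rule lists_card_le[OF step fin bd, of f]) auto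
  then show ?thesis by (simp add: TS_def)
qed

lemma TP_card: "card (TP e) \<le> card PB ^ e \<and> finite (TP e)"
proof -
  have fP: "finite PB" using finite_subset[OF PB_vecs finite_vecs] .
  have sub: "TP e \<subseteq> {xs. set xs \<subseteq> PB \<and> length xs = e}" by (auto simp: TP_def)
  show ?thesis using card_mono[OF finite_lists_length_eq[OF fP] sub] card_lists_length_eq[OF fP]
      finite_subset[OF sub finite_lists_length_eq[OF fP]] by simp
qed

lemma MS_card:
  assumes T1: "T1 \<in> TP e" and T2: "T2 \<in> TS f" and ef: "e + f = k"
  shows "card (MS T1 T2) = 2^(n*n)" "finite (MS T1 T2)"
proof -
  let ?S = "spl NB (T2 @ T1)"
  have sg: "subgrp ?S" by (rule subgrp_spl[OF subgrp_NB])
  have Sv: "?S \<subseteq> vecs m" by (rule spl_vecs) (use NB_vecs PB_vecs T1 T2 in \<open>auto simp: TP_def TS_def\<close>)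
  have sP: "spl NB T1 \<subseteq> PB" by (rule spl_least[OF subgrp_PB NB_PB]) (use T1 in \<open>simp add: TP_def\<close>)
  have ind: "indep NB (T2 @ T1)"
    by (rule indep_append) (use T1 T2 indep_mono[OF sP] in \<open>auto simp: TP_def TS_def\<close>)
  have fN: "finite NB" using finite_subset[OF NB_vecs finite_vecs] .
  have "card ?S = 2^(m-r) * 2^(e+f)" using card_spl[OF subgrp_NB fN ind] rdims T1 T2 by (simp add: TP_def TS_def)
  also have "\<dots> = 2^(m-n)" using ef rdims(1) nr by (simp add: k_def power_add[symmetric])
  finally have cS: "card ?S = 2^(m-n)" .
  have "card (perp m ?S) * 2^(m-n) = 2^n * 2^(m-n)"
    using card_perp[OF sg Sv] cS nr rdims(1) by (simp add: power_add[symmetric])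
  then have cp: "card (perp m ?S) = 2^n" by simp
  show "card (MS T1 T2) = 2^(n*n)" using count_ker(1)[OF sg Sv, of n] cp by (simp add: MS_def power_mult)
  show "finite (MS T1 T2)" using count_ker(2)[OF sg Sv, of n] by (simp add: MS_def)
qed

lemma orth_ker:
  assumes "set ys \<subseteq> kerM m M" "\<forall>z\<in>kerM m M. \<forall>z'\<in>kerM m M. dotv m z (Phi z') = 0"
  shows "orth Phi m ys"
  by (rule orth_gen[OF assms])

lemma X_to_Y:
  assumes M: "M \<in> Good" and T1: "T1 \<in> T1s M e" and T2: "T2 \<in> T2s M f"
  shows "T1 \<in> TP e" "T2 \<in> TS f" "M \<in> MS T1 T2"
proof -
  have G: "M \<in> mats m n" "NB \<subseteq> kerM m M" "\<forall>z\<in>kerM m M. \<forall>z'\<in>kerM m M. dotv m z (Phi z') = 0"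
    using M unfolding Good_def by blast+
  have t1: "length T1 = e" "set T1 \<subseteq> K1 M" "indep NB T1" using T1 unfolding T1s_def by blast+
  have t2: "length T2 = f" "set T2 \<subseteq> kerM m M" "indep PB T2" using T2 unfolding T2s_def by blast+
  have "set T1 \<subseteq> PB" using t1(2) unfolding K1_def by blast
  then show "T1 \<in> TP e" using t1 unfolding TP_def by blast
  have "set T2 \<subseteq> vecs m" using t2(2) kerM_vecs by blast
  then show "T2 \<in> TS f" using t2 orth_ker[OF t2(2) G(3)] unfolding TS_def by blast
  have "set T1 \<subseteq> kerM m M" using t1(2) unfolding K1_def by blast
  then have "set (T2 @ T1) \<subseteq> kerM m M" using t2(2) by simp
  then have "spl NB (T2 @ T1) \<subseteq> kerM m M" by (rule spl_least[OF subgrp_kerM G(2)])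
  then show "M \<in> MS T1 T2" using G(1) unfolding MS_def by blast
qed

lemma emax_props: "emax M \<le> k" "T1s M (emax M) \<noteq> {}" "\<And>e. e \<le> k \<Longrightarrow> T1s M e \<noteq> {} \<Longrightarrow> e \<le> emax M"
proof -
  have fin: "finite {e. e \<le> k \<and> T1s M e \<noteq> {}}" by (rule finite_subset[of _ "{..k}"]) auto
  have ne: "0 \<in> {e. e \<le> k \<and> T1s M e \<noteq> {}}" by (auto simp: T1s_def)
  have "emax M \<in> {e. e \<le> k \<and> T1s M e \<noteq> {}}" unfolding emax_def using Max_in[OF fin] ne by blast
  then show "emax M \<le> k" "T1s M (emax M) \<noteq> {}" by auto
  show "\<And>e. e \<le> k \<Longrightarrow> T1s M e \<noteq> {} \<Longrightarrow> e \<le> emax M" unfolding emax_def using Max_ge[OF fin] by blast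
qed

lemma subgrp_K1: "subgrp (K1 M)" by (simp add: K1_def subgrp_Int subgrp_kerM subgrp_PB)
lemma finite_K1: "finite (K1 M)" unfolding K1_def using finite_subset[OF _ finite_vecs[of m]] kerM_vecs by blast
lemma Good_D: assumes "M \<in> Good" shows "M \<in> mats m n" "NB \<subseteq> kerM m M" "\<forall>z\<in>kerM m M. \<forall>z'\<in>kerM m M. dotv m z (Phi z') = 0"
  using assms unfolding Good_def by blast+
lemma NB_K1: "M \<in> Good \<Longrightarrow> NB \<subseteq> K1 M" using NB_PB Good_D(2) unfolding K1_def by blast
lemma fNB: "finite NB" using finite_subset[OF NB_vecs finite_vecs] .

lemma K1_lower:
  assumes M: "M \<in> Good" and T: "T1 \<in> T1s M e"
  shows "card NB * 2^e \<le> card (K1 M)"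
proof -
  have "spl NB T1 \<subseteq> K1 M" by (rule spl_least[OF subgrp_K1 NB_K1[OF M]]) (use T in \<open>simp add: T1s_def\<close>)
  then have "card (spl NB T1) \<le> card (K1 M)" by (rule card_mono[OF finite_K1])
  then show ?thesis using card_spl[OF subgrp_NB fNB] T by (simp add: T1s_def)
qed

lemma T1s_D: "T1 \<in> T1s M e \<Longrightarrow> length T1 = e \<and> set T1 \<subseteq> K1 M \<and> indep NB T1"
  unfolding T1s_def by blast

lemma K1_upper:
  assumes M: "M \<in> Good" and e: "emax M = e" "e < k"
  shows "card (K1 M) \<le> card NB * 2^e"
proof -
  obtain T1 where T1: "T1 \<in> T1s M e" using emax_props(2)[of M] e by auto
  have t1: "length T1 = e" "set T1 \<subseteq> K1 M" "indep NB T1" using T1s_D[OF T1] by blast+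
  have "K1 M \<subseteq> spl NB T1"
  proof
    fix x assume x: "x \<in> K1 M"
    show "x \<in> spl NB T1"
    proof (rule ccontr)
      assume nx: "x \<notin> spl NB T1"
      have "length (x # T1) = Suc e" "set (x # T1) \<subseteq> K1 M" "indep NB (x # T1)"
        using t1 x nx by simp_all
      then have "x # T1 \<in> T1s M (Suc e)" unfolding T1s_def by blast
      then have "T1s M (Suc e) \<noteq> {}" by blast
      moreover have "Suc e \<le> k" using e by simp
      ultimately have "Suc e \<le> emax M" by (rule emax_props(3)[rotated])
      then show False using e by simp
    qed
  qed
  then have "card (K1 M) \<le> card (spl NB T1)" by (rule card_mono[OF finite_spl[OF fNB]])
  also have "\<dots> \<le> card NB * 2^e" using card_spl_le[OF fNB, of T1] t1 by simp
  finally show ?thesis .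
qed

lemma T1_lower:
  assumes M: "M \<in> Good" and e: "emax M = e"
  shows "card (T1s M e) \<ge> (card NB * 2^(e-1))^e \<and> finite (T1s M e)"
proof -
  let ?Q = "\<lambda>xs. set xs \<subseteq> K1 M \<and> indep NB xs"
  let ?A = "\<lambda>ys. K1 M - spl NB ys"
  have step: "\<And>x ys. ?Q (x#ys) \<longleftrightarrow> x \<in> ?A ys \<and> ?Q ys" by auto
  have fin: "\<And>ys. finite (?A ys)" using finite_K1 by blast
  obtain T0 where T0: "T0 \<in> T1s M e" using emax_props(2)[of M] e by auto
  have cK: "card NB * 2^e \<le> card (K1 M)" by (rule K1_lower[OF M T0])
  have bd: "card (?A ys) \<ge> card NB * 2^(e-1)" if Q: "?Q ys" and l: "length ys < e" for ys
  proof -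
    have sub: "spl NB ys \<subseteq> K1 M" by (rule spl_least[OF subgrp_K1 NB_K1[OF M]]) (use Q in blast)
    have c1: "card (?A ys) + card (spl NB ys) = card (K1 M)"
      using card_Diff_subset[OF finite_spl[OF fNB] sub] card_mono[OF finite_K1 sub] by simp
    have c2: "card (spl NB ys) = card NB * 2^length ys" using card_spl[OF subgrp_NB fNB] Q by blast
    have "2^length ys \<le> (2::nat)^(e-1)" using l by simp
    then have c3: "card NB * 2^length ys \<le> card NB * 2^(e-1)" by (rule mult_le_mono2)
    have "(2::nat)^e = 2 * 2^(e-1)" using l by (cases e) auto
    then have c4: "card NB * 2^e = 2 * (card NB * 2^(e-1))" by simp
    show ?thesis using c1 c2 c3 c4 cK by linarith
  qed
  have "card {xs. length xs = e \<and> ?Q xs} \<ge> (card NB * 2^(e-1))^e \<and> finite {xs. length xs = e \<and> ?Q xs}"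
    by (rule lists_card_ge[OF step _ fin bd, of e]) auto
  then show ?thesis unfolding T1s_def .
qed

lemma kerM_lower: "M \<in> mats m n \<Longrightarrow> n \<le> m \<Longrightarrow> 2^(m-n) \<le> card (kerM m M)"
proof -
  assume M: "M \<in> mats m n" and nm: "n \<le> m"
  have "2^(m-n) * 2^n \<le> card (kerM m M) * 2^n" using card_kerM[OF M] nm by (simp add: power_add[symmetric])
  then show ?thesis by simp
qed

lemma T2_lower:
  assumes M: "M \<in> Good" and e: "emax M = e"
  shows "card (T2s M (k-e)) \<ge> (2^(m-n-1))^(k-e) \<and> finite (T2s M (k-e))"
proof -
  let ?Q = "\<lambda>xs. set xs \<subseteq> kerM m M \<and> indep PB xs"
  let ?A = "\<lambda>ys. kerM m M - spl PB ys"
  have step: "\<And>x ys. ?Q (x#ys) \<longleftrightarrow> x \<in> ?A ys \<and> ?Q ys" by auto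
  have fK: "finite (kerM m M)" using finite_subset[OF kerM_vecs finite_vecs] .
  have fin: "\<And>ys. finite (?A ys)" using fK by blast
  have Mm: "M \<in> mats m n" using Good_D(1)[OF M] .
  have bd: "card (?A ys) \<ge> 2^(m-n-1)" if Q: "?Q ys" and l: "length ys < k - e" for ys
  proof -
    have ek: "e < k" using l by simp
    have cK1: "card (K1 M) \<le> 2^(m-r) * 2^e" using K1_upper[OF M e ek] rdims(3) by simp
    have z0: "0 \<in> kerM m M" using subgrp_kerM[of m M] unfolding subgrp_def by blast
    have s0: "spl {0} ys \<subseteq> kerM m M"
      by (rule spl_least[OF subgrp_kerM]) (use Q z0 in blast)+
    have inc: "kerM m M \<inter> spl PB ys \<subseteq> spl (K1 M) ys"
    proof
      fix z assume z: "z \<in> kerM m M \<inter> spl PB ys"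
      obtain w s where ws: "w \<in> PB" "s \<in> spl {0} ys" "z = w + s"
        using spl_decomp[OF subgrp_PB, of z ys] z by blast
      have "s \<in> kerM m M" using s0 ws(2) by blast
      then have "z + s \<in> kerM m M" using z subgrp_kerM[of m M] unfolding subgrp_def by blast
      moreover have "z + s = w" using ws(3) by (simp add: add.assoc)
      ultimately have "w \<in> K1 M" using ws(1) unfolding K1_def by blast
      then show "z \<in> spl (K1 M) ys" using spl_sum[OF _ ws(2)] ws(3) by blast
    qed
    have "card (kerM m M \<inter> spl PB ys) \<le> card (spl (K1 M) ys)"
      by (rule card_mono[OF finite_spl[OF finite_K1] inc])
    also have "\<dots> \<le> card (K1 M) * 2^length ys" by (rule card_spl_le[OF finite_K1])
    also have "\<dots> \<le> 2^(m-r) * 2^e * 2^length ys" using cK1 by simp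
    also have "\<dots> = 2^(m-r+e+length ys)" by (simp add: power_add)
    also have "\<dots> \<le> 2^(m-n-1)"
    proof (rule power_increasing)
      show "m - r + e + length ys \<le> m - n - 1" using l rdims(1) nr unfolding k_def by linarith
    qed simp
    finally have c1: "card (kerM m M \<inter> spl PB ys) \<le> 2^(m-n-1)" .
    have fI: "finite (kerM m M \<inter> spl PB ys)" using fK by blast
    have c2a: "card (?A ys) = card (kerM m M) - card (kerM m M \<inter> spl PB ys)"
      by (rule card_Diff_subset_Int[OF fI])
    have c2b: "card (kerM m M \<inter> spl PB ys) \<le> card (kerM m M)" by (rule card_mono[OF fK]) blast
    have c2: "card (?A ys) + card (kerM m M \<inter> spl PB ys) = card (kerM m M)" using c2a c2b by linarith
    have mn: "n < m" using ek rdims(1) nr unfolding k_def by linarith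
    have c3: "2^(m-n) \<le> card (kerM m M)" using kerM_lower[OF Mm] mn by simp
    have c4: "(2::nat)^(m-n) = 2 * 2^(m-n-1)" using mn by (cases "m-n") auto
    show ?thesis using c1 c2 c3 c4 by linarith
  qed
  have "card {xs. length xs = k-e \<and> ?Q xs} \<ge> (2^(m-n-1))^(k-e) \<and> finite {xs. length xs = k-e \<and> ?Q xs}"
    by (rule lists_card_ge[OF step _ fin bd, of "k-e"]) auto
  then show ?thesis unfolding T2s_def .
qed

lemma finite_Ge: "finite (Ge e)" using finite_Good unfolding Ge_def by simp

lemma double:
  assumes ek: "e \<le> k"
  shows "card (Ge e) * ((card NB * 2^(e-1))^e * (2^(m-n-1))^(k-e)) \<le> card (TP e) * card (TS (k-e)) * 2^(n*n)"
proof -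
  define X where "X = Sigma (Ge e) (\<lambda>M. T1s M e \<times> T2s M (k-e))"
  define Y where "Y = Sigma (TP e \<times> TS (k-e)) (\<lambda>p. MS (fst p) (snd p))"
  have GeD: "\<And>M. M \<in> Ge e \<Longrightarrow> M \<in> Good \<and> emax M = e" unfolding Ge_def by blast
  have fX: "\<forall>M\<in>Ge e. finite (T1s M e \<times> T2s M (k-e))"
  proof
    fix M assume "M \<in> Ge e"
    then have G: "M \<in> Good" "emax M = e" using GeD by blast+
    have "finite (T1s M e)" using T1_lower[OF G] by blast
    moreover have "finite (T2s M (k-e))" using T2_lower[OF G] by blast
    ultimately show "finite (T1s M e \<times> T2s M (k-e))" by (rule finite_cartesian_product)
  qed
  have "card X = (\<Sum>M\<in>Ge e. card (T1s M e \<times> T2s M (k-e)))"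
    unfolding X_def by (rule card_SigmaI[OF finite_Ge fX])
  also have "\<dots> \<ge> (\<Sum>M\<in>Ge e. (card NB * 2^(e-1))^e * (2^(m-n-1))^(k-e))"
  proof (rule sum_mono)
    fix M assume "M \<in> Ge e"
    then have G: "M \<in> Good" "emax M = e" using GeD by blast+
    have a: "(card NB * 2^(e-1))^e \<le> card (T1s M e)" using T1_lower[OF G] by blast
    have b: "(2^(m-n-1))^(k-e) \<le> card (T2s M (k-e))" using T2_lower[OF G] by blast
    show "(card NB * 2^(e-1))^e * (2^(m-n-1))^(k-e) \<le> card (T1s M e \<times> T2s M (k-e))"
      unfolding card_cartesian_product by (rule mult_le_mono[OF a b])
  qed
  finally have X1: "card (Ge e) * ((card NB * 2^(e-1))^e * (2^(m-n-1))^(k-e)) \<le> card X" by simp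
  have fTP: "finite (TP e)" using TP_card by blast
  have fTS: "finite (TS (k-e))" using TS_card by blast
  have ef: "e + (k - e) = k" using ek by simp
  have fY: "\<forall>p\<in>TP e \<times> TS (k-e). finite (MS (fst p) (snd p))"
  proof
    fix p assume p: "p \<in> TP e \<times> TS (k-e)"
    have "fst p \<in> TP e" "snd p \<in> TS (k-e)" using p by (simp_all add: mem_Times_iff)
    then show "finite (MS (fst p) (snd p))" by (rule MS_card(2)[OF _ _ ef])
  qed
  have fP: "finite (TP e \<times> TS (k-e))" using fTP fTS by (rule finite_cartesian_product)
  have "card Y = (\<Sum>p\<in>TP e \<times> TS (k-e). card (MS (fst p) (snd p)))"
    unfolding Y_def by (rule card_SigmaI[OF fP fY])
  also have "\<dots> = (\<Sum>p\<in>TP e \<times> TS (k-e). 2^(n*n))"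
  proof (rule sum.cong[OF refl])
    fix p assume p: "p \<in> TP e \<times> TS (k-e)"
    have "fst p \<in> TP e" "snd p \<in> TS (k-e)" using p by (simp_all add: mem_Times_iff)
    then show "card (MS (fst p) (snd p)) = 2^(n*n)" by (rule MS_card(1)[OF _ _ ef])
  qed
  also have "\<dots> = card (TP e) * card (TS (k-e)) * 2^(n*n)" by (simp add: card_cartesian_product)
  finally have Y1: "card Y = card (TP e) * card (TS (k-e)) * 2^(n*n)" .
  have fY': "finite Y" unfolding Y_def by (rule finite_SigmaI[OF fP]) (use fY in blast)
  have inj: "inj_on (\<lambda>x. (snd x, fst x)) X" by (rule inj_onI) (simp add: prod_eq_iff)
  have img: "(\<lambda>x. (snd x, fst x)) ` X \<subseteq> Y"
  proof
    fix q assume "q \<in> (\<lambda>x. (snd x, fst x)) ` X"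
    then obtain x where x: "x \<in> X" "q = (snd x, fst x)" by blast
    obtain M T1 T2 where xM: "x = (M, (T1, T2))" by (cases x) auto
    have xx: "M \<in> Ge e" "T1 \<in> T1s M e" "T2 \<in> T2s M (k-e)" using x(1) unfolding xM X_def by simp_all
    have G: "M \<in> Good" using GeD[OF xx(1)] by blast
    have "(T1, T2) \<in> TP e \<times> TS (k-e)" using X_to_Y(1,2)[OF G xx(2) xx(3)] by simp
    moreover have "M \<in> MS T1 T2" using X_to_Y(3)[OF G xx(2) xx(3)] .
    ultimately show "q \<in> Y" unfolding Y_def x(2) xM by simp
  qed
  have "card X \<le> card Y" by (rule card_inj_on_le[OF inj img fY'])
  then show ?thesis using X1 Y1 by linarith
qed

end



lemma sumS: "f \<le> M \<Longrightarrow> real (\<Sum>j<f. (M - j)) = real f * real M - real f * (real f - 1) / 2"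
proof (induction f)
  case 0 then show ?case by simp
next
  case (Suc f)
  then have IH: "real (\<Sum>j<f. (M - j)) = real f * real M - real f * (real f - 1) / 2" by simp
  have "real (\<Sum>j<Suc f. (M - j)) = real (\<Sum>j<f. (M - j)) + real (M - f)" by simp
  also have "real (M - f) = real M - real f" using Suc.prems by (simp add: of_nat_diff)
  finally show ?case unfolding IH by (simp add: field_simps)
qed

context bsetup2 begin

lemma Ge_bound:
  assumes ek: "e \<le> k"
  shows "real (card (Ge e)) \<le> 2 powr (real n * real r + 3/2 * real k - (real k)^2 / 8)"
proof -
  define f where "f = k - e"
  define cN where "cN = card NB"
  define S where "S = (\<Sum>j<f. (m - j))"
  define A where "A = (e-1)*e + (m-n-1)*f"
  define Bx where "Bx = (2*n-r)*e + S + n*n"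
  define G where "G = card (Ge e)"
  have cN: "cN = 2^(m-r)" using rdims(3) cN_def by simp
  have cNp: "cN > 0" using cN by simp
  have d1: "G * ((cN * 2^(e-1))^e * (2^(m-n-1))^f) \<le> card (TP e) * card (TS f) * 2^(n*n)"
    using double[OF ek] unfolding G_def cN_def f_def .
  have cPB: "card PB \<le> cN * 2^(2*n-r)" using card_PB rdims(4) cN_def by simp
  have tp: "card (TP e) \<le> (cN * 2^(2*n-r))^e"
    using TP_card[of e] power_mono[OF cPB, of e] by linarith
  have ts: "card (TS f) \<le> 2^S"
    using TS_card[of f] unfolding S_def power_sum by simp
  have l1: "(cN * 2^(e-1))^e * (2^(m-n-1))^f = cN^e * 2^A"
    unfolding A_def by (simp add: power_mult_distrib power_mult[symmetric] power_add mult.commute)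
  have r1: "(cN * 2^(2*n-r))^e * 2^S * 2^(n*n) = cN^e * 2^Bx"
    unfolding Bx_def by (simp add: power_mult_distrib power_mult[symmetric] power_add mult.commute)
  have "G * (cN^e * 2^A) \<le> (cN * 2^(2*n-r))^e * 2^S * 2^(n*n)"
  proof -
    have "G * (cN^e * 2^A) \<le> card (TP e) * card (TS f) * 2^(n*n)" using d1 l1 by simp
    also have "\<dots> \<le> (cN * 2^(2*n-r))^e * 2^S * 2^(n*n)"
      by (intro mult_le_mono tp ts le_refl)
    finally show ?thesis .
  qed
  then have "cN^e * (G * 2^A) \<le> cN^e * 2^Bx" using r1 by (simp add: ac_simps)
  then have nat_ineq: "G * 2^A \<le> 2^Bx" using cNp by simp
  have "real G * 2 powr real A \<le> 2 powr real Bx"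
  proof -
    have "real (G * 2^A) \<le> real ((2::nat)^Bx)" using nat_ineq by (simp only: of_nat_le_iff)
    then show ?thesis by (simp add: powr_realpow)
  qed
  then have Gb: "real G \<le> 2 powr (real Bx - real A)"
    by (simp add: powr_diff pos_le_divide_eq)
  have fk: "f \<le> k" unfolding f_def by simp
  have kr: "k \<le> r" unfolding k_def by simp
  have rk: "real r = real n + real k" using nr unfolding k_def by (simp add: of_nat_diff)
  have kef: "real k = real e + real f" using ek unfolding f_def by (simp add: of_nat_diff)
  have eA1: "real ((e-1)*e) = real e * real e - real e" by (cases e) (simp_all add: algebra_simps)
  have eA2: "real ((m-n-1)*f) = (real m - real n - 1) * real f"
  proof (cases "f = 0")
    case True then show ?thesis by simp
  next
    case False
    then have "n + 1 \<le> m" using rdims(1) fk kr nr unfolding k_def by linarith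
    then show ?thesis by (simp add: of_nat_diff)
  qed
  have eB1: "real ((2*n-r)*e) = (2 * real n - real r) * real e" using rdims(2) by (simp add: of_nat_diff)
  have eS: "real S = real f * real m - real f * (real f - 1) / 2"
    unfolding S_def by (rule sumS) (use fk kr rdims(1) in linarith)
  have rA: "real A = real e * real e - real e + (real m - real n - 1) * real f"
    unfolding A_def using eA1 eA2 by simp
  have rB: "real Bx = (2 * real n - real r) * real e + (real f * real m - real f * (real f - 1) / 2) + real n * real n"
    unfolding Bx_def using eB1 eS by simp
  have ex: "real Bx - real A \<le> real n * real r + 3/2 * real k - (real k)^2 / 8"
  proof -
    have "real n * real r + 3/2 * real k - (real k)^2 / 8 - (real Bx - real A)
        = real e / 2 + 2 * real e ^ 2 + real e * real f + real f ^ 2 / 2 - (real e + real f)^2 / 8"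
      unfolding rA rB rk kef by (simp add: field_simps power2_eq_square)
    moreover have "real e / 2 + 2 * real e ^ 2 + real e * real f + real f ^ 2 / 2 - (real e + real f)^2 / 8 \<ge> 0"
      by (simp add: power2_eq_square field_simps)
    ultimately show ?thesis by linarith
  qed
  have "2 powr (real Bx - real A) \<le> 2 powr (real n * real r + 3/2 * real k - (real k)^2 / 8)"
    by (rule powr_mono[OF ex]) simp
  then show ?thesis using Gb unfolding G_def by linarith
qed

lemma Good_bound: "real (card Good) \<le> (real k + 1) * 2 powr (real n * real r + 3/2 * real k - (real k)^2 / 8)"
proof -
  have sub: "Good \<subseteq> (\<Union>e\<in>{..k}. Ge e)"
  proof
    fix M assume "M \<in> Good"
    then have "M \<in> Ge (emax M)" "emax M \<in> {..k}" using emax_props(1)[of M] unfolding Ge_def by auto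
    then show "M \<in> (\<Union>e\<in>{..k}. Ge e)" by blast
  qed
  have "card Good \<le> card (\<Union>e\<in>{..k}. Ge e)"
    by (rule card_mono[OF _ sub]) (simp add: finite_Ge)
  also have "\<dots> \<le> (\<Sum>e\<in>{..k}. card (Ge e))" by (rule card_UN_le) simp
  finally have "real (card Good) \<le> (\<Sum>e\<in>{..k}. real (card (Ge e)))" by (simp only: of_nat_le_iff of_nat_sum[symmetric])
  also have "\<dots> \<le> (\<Sum>e\<in>{..k}. 2 powr (real n * real r + 3/2 * real k - (real k)^2 / 8))"
    by (rule sum_mono, rule Ge_bound) simp
  also have "\<dots> = (real k + 1) * 2 powr (real n * real r + 3/2 * real k - (real k)^2 / 8)" by simp
  finally show ?thesis .
qed

lemma Img_bound: "real (card Img) \<le> (real k + 1) * 2 powr (real n * real r + 3/2 * real k - (real k)^2 / 8)"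
proof -
  have "card Img \<le> card Good" by (rule card_mono[OF finite_Good Img_Good])
  then show ?thesis using Good_bound by linarith
qed

end



lemma entropy_le:
  assumes S: "finite S" "S \<noteq> {}"
  shows "entropy_uniform_image S f \<le> log 2 (real (card (f ` S)))"
proof -
  let ?Y = "f ` S"
  define nS where "nS = real (card S)"
  define Yc where "Yc = real (card ?Y)"
  define p where "p y = real (card {x\<in>S. f x = y}) / nS" for y
  have nSp: "nS > 0" using S by (simp add: nS_def card_gt_0_iff)
  have fY: "finite ?Y" using S by simp
  have Ycp: "Yc > 0" using S by (simp add: Yc_def card_gt_0_iff)
  have pp: "p y > 0" if y: "y \<in> ?Y" for y
  proof -
    have "{x\<in>S. f x = y} \<noteq> {}" using y by auto
    then have "card {x\<in>S. f x = y} > 0" using S by (simp add: card_gt_0_iff)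
    then show ?thesis using nSp by (simp add: p_def)
  qed
  have U: "S = (\<Union>y\<in>?Y. {x\<in>S. f x = y})" by auto
  have "card S = (\<Sum>y\<in>?Y. card {x\<in>S. f x = y})"
    by (subst U, rule card_UN_disjoint) (use S in auto)
  then have "nS = (\<Sum>y\<in>?Y. real (card {x\<in>S. f x = y}))" unfolding nS_def by (simp add: of_nat_sum)
  then have sp: "(\<Sum>y\<in>?Y. p y) = 1" using nSp by (simp add: p_def sum_divide_distrib[symmetric])
  have key: "p y * (- ln (p y) - ln Yc) \<le> 1 / Yc - p y" if y: "y \<in> ?Y" for y
  proof -
    have py: "p y > 0" by (rule pp[OF y])
    have "ln (1 / (p y * Yc)) \<le> 1 / (p y * Yc) - 1" by (rule ln_le_minus_one) (use py Ycp in simp)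
    moreover have "ln (1 / (p y * Yc)) = - ln (p y) - ln Yc" using py Ycp by (simp add: ln_div ln_mult)
    ultimately have "- ln (p y) - ln Yc \<le> 1 / (p y * Yc) - 1" by simp
    then have "p y * (- ln (p y) - ln Yc) \<le> p y * (1 / (p y * Yc) - 1)" using py by (simp add: mult_left_mono)
    also have "\<dots> = 1 / Yc - p y" using py Ycp by (simp add: field_simps)
    finally show ?thesis .
  qed
  have "(\<Sum>y\<in>?Y. p y * (- ln (p y) - ln Yc)) \<le> (\<Sum>y\<in>?Y. (1 / Yc - p y))"
    by (rule sum_mono) (rule key)
  also have "\<dots> = 0" using sp Ycp by (simp add: sum_subtractf Yc_def)
  finally have "(\<Sum>y\<in>?Y. p y * (- ln (p y))) - ln Yc * (\<Sum>y\<in>?Y. p y) \<le> 0"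
    by (simp add: algebra_simps sum_subtractf sum_distrib_left sum_distrib_right)
  then have L: "- (\<Sum>y\<in>?Y. p y * ln (p y)) \<le> ln Yc" using sp by (simp add: sum_negf)
  have "entropy_uniform_image S f = - (\<Sum>y\<in>?Y. p y * log 2 (p y))"
    unfolding entropy_uniform_image_def p_def nS_def Let_def by simp
  also have "\<dots> = (- (\<Sum>y\<in>?Y. p y * ln (p y))) / ln 2"
    by (simp add: log_def sum_divide_distrib[symmetric])
  also have "\<dots> \<le> ln Yc / ln 2" by (rule divide_right_mono[OF L]) simp
  also have "\<dots> = log 2 Yc" by (simp add: log_def)
  finally show ?thesis unfolding Yc_def .
qed

lemma log_le_self: "log 2 (real k + 1) \<le> real k + 1"
proof -
  have "real k + 1 \<le> 2 powr (real k + 1)"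
  proof -
    have "k + 1 < (2::nat)^(k+1)" by (rule less_exp)
    then have "real (k + 1) \<le> real ((2::nat)^(k+1))" by linarith
    then show ?thesis by (simp add: powr_realpow[symmetric] add.commute powr_add)
  qed
  then have "log 2 (real k + 1) \<le> log 2 (2 powr (real k + 1))" by (rule log_mono[rotated 2]) simp_all
  then show ?thesis by simp
qed

theorem theoremD1:
  fixes c :: real
  assumes "c > 1"
  shows "\<exists>d::real. d > 0 \<and> (\<exists>N::nat. \<forall>n\<ge>N. \<forall>m::nat. real m \<ge> c * real n \<longrightarrow>
           (\<forall>B\<in>mats m (2*n).
              entropy_uniform_image (iso_mats n) (matmul m (2*n) n B)
                \<le> (1 - d) * real m * real n))"
proof -
  define g where "g = (c - 1) / 2"
  define d where "d = min ((c - 1) / (2 * c)) (g^2 / 64)"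
  define N where "N = nat \<lceil>96 / g^2\<rceil> + 1"
  have gp: "g > 0" using assms by (simp add: g_def)
  have d1: "d \<le> (c - 1) / (2 * c)" and d2: "d \<le> g^2 / 64" by (simp_all add: d_def)
  have dp: "d > 0" using assms gp by (simp add: d_def)
  have dh: "d \<le> 1/2"
  proof -
    have "(c - 1) / (2 * c) \<le> 1/2" using assms by (simp add: field_simps)
    then show ?thesis using d1 by linarith
  qed
  have dc: "(1 - d) * c \<ge> 1 + g"
  proof -
    have dc0: "d * c \<le> (c - 1) / 2" using d1 assms by (simp add: field_simps)
    have e: "(1 - d) * c = c - d * c" by (simp add: algebra_simps)
    show ?thesis unfolding g_def using e dc0 by (simp add: field_simps mult.commute)
  qed
  show ?thesis
  proof (intro exI conjI allI impI ballI)
    show "d > 0" by (rule dp)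
    fix n m B assume nN: "N \<le> n" and mc: "c * real n \<le> real m" and B: "B \<in> mats m (2*n)"
    interpret bsetup m n B using B by unfold_locales
    have n1: "n \<ge> 1" using nN N_def by simp
    have gn: "g^2 * real n \<ge> 96"
    proof -
      have "real N \<ge> 96 / g^2" unfolding N_def by linarith
      then have "real n \<ge> 96 / g^2" using nN by linarith
      then show ?thesis using gp by (simp add: field_simps)
    qed
    have finI: "finite (iso_mats n)" by (rule finite_subset[OF _ finite_mats[of "2*n" n]]) (auto simp: iso_mats_def)
    obtain r where r: "card RB = 2^r" "r \<le> m" "r \<le> 2*n" by (rule dims) blast
    have RHSnn: "0 \<le> (1 - d) * real m * real n" using dh by simp
    show "entropy_uniform_image (iso_mats n) (matmul m (2*n) n B) \<le> (1 - d) * real m * real n"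
    proof (cases "iso_mats n = {}")
      case True
      then show ?thesis using RHSnn by (simp add: entropy_uniform_image_def)
    next
      case False
      have H: "entropy_uniform_image (iso_mats n) (matmul m (2*n) n B) \<le> log 2 (real (card Img))"
        unfolding Img_def by (rule entropy_le[OF finI False])
      have cpos: "real (card Img) > 0"
        using False finI by (simp add: Img_def card_gt_0_iff)
      show ?thesis
      proof (cases "real r \<le> (1 - d) * real m")
        case True
        have "card Img \<le> 2^(r*n)" by (rule card_Img_triv[OF r(1)])
        then have "real (card Img) \<le> real ((2::nat) ^ (r*n))" by (simp only: of_nat_le_iff)
        also have "\<dots> = 2 powr (real (r*n))" by (subst powr_realpow) simp_all
        finally have "real (card Img) \<le> 2 powr (real (r*n))" .
        then have "log 2 (real (card Img)) \<le> log 2 (2 powr (real (r*n)))" using cpos by (simp del: log_powr_cancel)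
        also have "\<dots> = real r * real n" by simp
        also have "\<dots> \<le> (1 - d) * real m * real n" using True by (simp add: mult_right_mono)
        finally show ?thesis using H by linarith
      next
        case False
        then have rgt: "(1 - d) * real m < real r" by simp
        have "(1 + g) * real n \<le> (1 - d) * c * real n" using dc by (simp add: mult_right_mono)
        also have "\<dots> \<le> (1 - d) * real m" using mc dh by (simp add: mult.assoc mult_left_mono)
        finally have rg: "(1 + g) * real n < real r" using rgt by linarith
        have "real n \<le> (1 + g) * real n" using gp by (simp add: algebra_simps)
        then have "real n < real r" using rg by linarith
        then have nr: "n \<le> r" by simp
        interpret bsetup2 m n B r using r(1) nr by unfold_locales
        have kk: "real k = real r - real n" using nr by (simp add: k_def of_nat_diff)
        have kle: "real k \<le> real n" using kk r(3) by simp
        have kge: "real k \<ge> g * real n" using kk rg by (simp add: algebra_simps)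
        have k2: "(real k)^2 \<ge> g^2 * (real n)^2"
        proof -
          have "0 \<le> g * real n" using gp by simp
          then have "(g * real n)^2 \<le> (real k)^2" by (rule power_mono[OF kge])
          then show ?thesis by (simp add: power_mult_distrib)
        qed
        have m4: "real m \<le> 4 * real n"
        proof -
          have "1/2 \<le> 1 - d" using dh by simp
          then have "(1/2) * real m \<le> (1 - d) * real m" by (rule mult_right_mono) simp
          then show ?thesis using rgt r(3) by simp
        qed
        have dmn: "d * real m * real n \<le> g^2 / 16 * (real n)^2"
        proof -
          have "d * real m \<le> (g^2 / 64) * (4 * real n)"
            using d2 m4 dp by (intro mult_mono) simp_all
          then have "d * real m * real n \<le> (g^2 / 64) * (4 * real n) * real n" by (rule mult_right_mono) simp
          then show ?thesis by (simp add: power2_eq_square)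
        qed
        have lg: "log 2 (real (card Img)) \<le> log 2 (real k + 1) + (real n * real r + 3/2 * real k - (real k)^2 / 8)"
        proof -
          have "log 2 (real (card Img)) \<le> log 2 ((real k + 1) * 2 powr (real n * real r + 3/2 * real k - (real k)^2 / 8))"
            using Img_bound cpos by (intro log_mono) simp_all
          also have "\<dots> = log 2 (real k + 1) + (real n * real r + 3/2 * real k - (real k)^2 / 8)"
            by (simp add: log_mult)
          finally show ?thesis .
        qed
        have ll: "log 2 (real k + 1) \<le> real k + 1" by (rule log_le_self)
        have "real r \<le> real m" using r(2) by simp
        then have "real r * real n \<le> real m * real n" by (rule mult_right_mono) simp
        then have nrm: "real n * real r \<le> real m * real n" by (simp add: mult.commute)
        have lin: "real k + 1 + 3/2 * real k \<le> 7/2 * real n" using kle n1 by simp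
        have q: "7/2 * real n \<le> g^2 / 16 * (real n)^2"
        proof -
          have "7/2 * real n * 16 \<le> g^2 * real n * real n" using gn n1 by (simp add: mult_right_mono)
          then show ?thesis by (simp add: power2_eq_square field_simps)
        qed
        have "log 2 (real (card Img)) \<le> (1 - d) * real m * real n"
        proof -
          have e: "(1 - d) * real m * real n = real m * real n - d * real m * real n" by (simp add: algebra_simps)
          show ?thesis unfolding e using lg ll nrm lin q k2 dmn by linarith
        qed
        then show ?thesis using H by linarith
      qed
    qed
  qed
qed


end
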